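(* Let $G$ be a group, $N$ a normal subgroup, $\Gamma=G/N$. Let $d_2\colon\mathrm{H}^1(N)^G\to\mathrm{H}^2(\Gamma)$ be the transgression map of the five-term exact sequence $0\to\mathrm{H}^1(\Gamma)\to\mathrm{H}^1(G)\to\mathrm{H}^1(N)^G\xrightarrow{d_2}\mathrm{H}^2(\Gamma)\to\mathrm{H}^2(G)$. Assume that $\operatorname{Ker}(c^3_\Gamma\colon\mathrm{H}^3_b(\Gamma)\to\mathrm{H}^3(\Gamma))$ and $\mathrm{H}^2(\Gamma)/d_2(\mathrm{H}^1(N)^G)$ are both finite dimensional. Then for every normal subgroup $L$ of $G$ with $L\geqslant N$, $\dim_{\mathbb{R}}\mathcal{W}(G,L,N)<\infty$. In particular, if $\mathrm{H}^3_b(\Gamma)$ and $\mathrm{H}^2(\Gamma)$ are finite dimensional, then $\dim_{\mathbb{R}}\mathcal{W}(G,L,N)<\infty$ for every normal subgroup $L\geqslant N$ of $G$.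
   Context: All (bounded) cohomology is with trivial real coefficients; $\mathrm{H}^*_b$ is bounded cohomology (cohomology of bounded inhomogeneous cochains) and $c^n_\Gamma$ is the comparison map induced by inclusion of bounded cochains. $\mathrm{Q}(N)^G$: homogeneous quasimorphisms on $N$ invariant under $G$-conjugation; $\mathrm{H}^1(N)^G$: $G$-invariant homomorphisms $N\to\mathbb{R}$; $\mathcal{W}(G,L,N)=\mathrm{Q}(N)^G/(\mathrm{H}^1(N)^G+\{\psi|_N:\psi\in\mathrm{Q}(L)^G\})$. *)

theory Defs
  imports "HOL-Algebra.Algebra"
begin

text \<open>An n-cochain on a group Gamma is a function Gamma^n -> R; we represent it as a function
  on lists which vanishes outside the lists of length n with entries in the carrier.\<close>

definition cochains :: "('a, 'b) monoid_scheme \<Rightarrow> nat \<Rightarrow> ('a list \<Rightarrow> real) set" where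
  "cochains \<Gamma> n = {f. \<forall>xs. f xs \<noteq> 0 \<longrightarrow> length xs = n \<and> set xs \<subseteq> carrier \<Gamma>}"

definition bounded_cochains :: "('a, 'b) monoid_scheme \<Rightarrow> nat \<Rightarrow> ('a list \<Rightarrow> real) set" where
  "bounded_cochains \<Gamma> n = {f \<in> cochains \<Gamma> n. \<exists>C. \<forall>xs. \<bar>f xs\<bar> \<le> C}"

text \<open>Coboundary delta : C^n -> C^(n+1) (trivial coefficients):
  (delta f)(g_1,...,g_(n+1)) = f(g_2,...,g_(n+1))
     + sum_(i=1..n) (-1)^i f(g_1,...,g_i g_(i+1),...,g_(n+1)) + (-1)^(n+1) f(g_1,...,g_n).\<close>

definition coboundary :: "('a, 'b) monoid_scheme \<Rightarrow> nat \<Rightarrow> ('a list \<Rightarrow> real) \<Rightarrow> ('a list \<Rightarrow> real)" where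
  "coboundary \<Gamma> n f = (\<lambda>xs. if length xs = Suc n \<and> set xs \<subseteq> carrier \<Gamma> then
       f (tl xs)
     + (\<Sum>i<n. (-1) ^ (i + 1) * f (take i xs @ [xs ! i \<otimes>\<^bsub>\<Gamma>\<^esub> xs ! (i + 1)] @ drop (i + 2) xs))
     + (-1) ^ (n + 1) * f (butlast xs)
     else 0)"

definition cocycles :: "('a, 'b) monoid_scheme \<Rightarrow> nat \<Rightarrow> ('a list \<Rightarrow> real) set" where
  "cocycles \<Gamma> n = {f \<in> cochains \<Gamma> n. coboundary \<Gamma> n f = (\<lambda>_. 0)}"

definition coboundaries :: "('a, 'b) monoid_scheme \<Rightarrow> nat \<Rightarrow> ('a list \<Rightarrow> real) set" where
  "coboundaries \<Gamma> n = (case n of 0 \<Rightarrow> {\<lambda>_. 0} | Suc m \<Rightarrow> coboundary \<Gamma> m ` cochains \<Gamma> m)"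

definition bounded_cocycles :: "('a, 'b) monoid_scheme \<Rightarrow> nat \<Rightarrow> ('a list \<Rightarrow> real) set" where
  "bounded_cocycles \<Gamma> n = {f \<in> bounded_cochains \<Gamma> n. coboundary \<Gamma> n f = (\<lambda>_. 0)}"

definition bounded_coboundaries :: "('a, 'b) monoid_scheme \<Rightarrow> nat \<Rightarrow> ('a list \<Rightarrow> real) set" where
  "bounded_coboundaries \<Gamma> n =
     (case n of 0 \<Rightarrow> {\<lambda>_. 0} | Suc m \<Rightarrow> coboundary \<Gamma> m ` bounded_cochains \<Gamma> m)"

definition fin_dim_quot :: "('x \<Rightarrow> real) set \<Rightarrow> ('x \<Rightarrow> real) set \<Rightarrow> bool" where
  "fin_dim_quot V W \<longleftrightarrow> (\<exists>F. finite F \<and> F \<subseteq> V \<and>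
     (\<forall>v\<in>V. \<exists>w\<in>W. \<exists>c. v = (\<lambda>x. w x + (\<Sum>f\<in>F. c f * f x))))"

text \<open>H^n(Gamma) = Z^n/B^n, H^n_b(Gamma) = Z^n_b/B^n_b, and
  Ker(c^n_Gamma) = (Z^n_b \<inter> B^n)/B^n_b.\<close>

definition fin_dim_H :: "('a, 'b) monoid_scheme \<Rightarrow> nat \<Rightarrow> bool" where
  "fin_dim_H \<Gamma> n \<longleftrightarrow> fin_dim_quot (cocycles \<Gamma> n) (coboundaries \<Gamma> n)"

definition fin_dim_Hb :: "('a, 'b) monoid_scheme \<Rightarrow> nat \<Rightarrow> bool" where
  "fin_dim_Hb \<Gamma> n \<longleftrightarrow> fin_dim_quot (bounded_cocycles \<Gamma> n) (bounded_coboundaries \<Gamma> n)"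

definition fin_dim_ker_comparison :: "('a, 'b) monoid_scheme \<Rightarrow> nat \<Rightarrow> bool" where
  "fin_dim_ker_comparison \<Gamma> n \<longleftrightarrow>
     fin_dim_quot (bounded_cocycles \<Gamma> n \<inter> coboundaries \<Gamma> n) (bounded_coboundaries \<Gamma> n)"

text \<open>Functions on a subgroup H are represented as functions on the ambient type vanishing off H.\<close>

definition inv_homs :: "('g, 'b) monoid_scheme \<Rightarrow> 'g set \<Rightarrow> ('g \<Rightarrow> real) set" where
  "inv_homs G H = {f. (\<forall>x. x \<notin> H \<longrightarrow> f x = 0)
      \<and> (\<forall>x\<in>H. \<forall>y\<in>H. f (x \<otimes>\<^bsub>G\<^esub> y) = f x + f y)
      \<and> (\<forall>g\<in>carrier G. \<forall>x\<in>H. f (g \<otimes>\<^bsub>G\<^esub> x \<otimes>\<^bsub>G\<^esub> inv\<^bsub>G\<^esub> g) = f x)}"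

definition inv_hom_quasimorphisms :: "('g, 'b) monoid_scheme \<Rightarrow> 'g set \<Rightarrow> ('g \<Rightarrow> real) set" where
  "inv_hom_quasimorphisms G H = {f. (\<forall>x. x \<notin> H \<longrightarrow> f x = 0)
      \<and> (\<exists>D. \<forall>x\<in>H. \<forall>y\<in>H. \<bar>f (x \<otimes>\<^bsub>G\<^esub> y) - f x - f y\<bar> \<le> D)
      \<and> (\<forall>x\<in>H. \<forall>k::int. f (x [^]\<^bsub>G\<^esub> k) = of_int k * f x)
      \<and> (\<forall>g\<in>carrier G. \<forall>x\<in>H. f (g \<otimes>\<^bsub>G\<^esub> x \<otimes>\<^bsub>G\<^esub> inv\<^bsub>G\<^esub> g) = f x)}"

text \<open>W(G,L,N) = Q(N)^G / (H^1(N)^G + {psi|_N : psi \<in> Q(L)^G}).\<close>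

definition fin_dim_W :: "('g, 'b) monoid_scheme \<Rightarrow> 'g set \<Rightarrow> 'g set \<Rightarrow> bool" where
  "fin_dim_W G L N \<longleftrightarrow> fin_dim_quot (inv_hom_quasimorphisms G N)
     {(\<lambda>x. a x + (if x \<in> N then b x else 0)) | a b.
        a \<in> inv_homs G N \<and> b \<in> inv_hom_quasimorphisms G L}"

text \<open>For phi \<in> H^1(N)^G choose psi : G -> R with psi(n g) = phi(n) + psi(g); then
  (g,h) |-> psi(h) - psi(gh) + psi(g) descends to a 2-cocycle on G/N representing d_2(phi).\<close>

definition transgression_cocycles :: "('g, 'b) monoid_scheme \<Rightarrow> 'g set \<Rightarrow> ('g set list \<Rightarrow> real) set" where
  "transgression_cocycles G N = {c \<in> cochains (G Mod N) 2. \<exists>\<phi> \<psi>.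
      \<phi> \<in> inv_homs G N
    \<and> (\<forall>n\<in>N. \<forall>g\<in>carrier G. \<psi> (n \<otimes>\<^bsub>G\<^esub> g) = \<phi> n + \<psi> g)
    \<and> (\<forall>g\<in>carrier G. \<forall>h\<in>carrier G.
         c [r_coset G N g, r_coset G N h] = \<psi> h - \<psi> (g \<otimes>\<^bsub>G\<^esub> h) + \<psi> g)}"

text \<open>Preimage in Z^2(G/N) of d_2(H^1(N)^G).\<close>

definition d2_image_reps :: "('g, 'b) monoid_scheme \<Rightarrow> 'g set \<Rightarrow> ('g set list \<Rightarrow> real) set" where
  "d2_image_reps G N = {(\<lambda>xs. c xs + b xs) | c b.
      c \<in> transgression_cocycles G N \<and> b \<in> coboundaries (G Mod N) 2}"

definition fin_dim_H2_mod_d2 :: "('g, 'b) monoid_scheme \<Rightarrow> 'g set \<Rightarrow> bool" where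
  "fin_dim_H2_mod_d2 G N \<longleftrightarrow> fin_dim_quot (cocycles (G Mod N) 2) (d2_image_reps G N)"

end

theory Submission
  imports Defs
begin

definition subsp :: "('x \<Rightarrow> real) set \<Rightarrow> bool" where
  "subsp S \<longleftrightarrow> (\<lambda>_. 0) \<in> S \<and> (\<forall>x\<in>S. \<forall>y\<in>S. \<forall>a b. (\<lambda>t. a * x t + b * y t) \<in> S)"

definition lc :: "('x \<Rightarrow> real) set \<Rightarrow> (('x \<Rightarrow> real) \<Rightarrow> real) \<Rightarrow> ('x \<Rightarrow> real)" where
  "lc F c = (\<lambda>t. \<Sum>f\<in>F. c f * f t)"

lemma subsp_zero: "subsp S \<Longrightarrow> (\<lambda>_. 0) \<in> S"
  by (simp add: subsp_def)

lemma subsp_comb: "subsp S \<Longrightarrow> x \<in> S \<Longrightarrow> y \<in> S \<Longrightarrow> (\<lambda>t. a * x t + b * y t) \<in> S"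
  by (simp add: subsp_def)

lemma subsp_add: "subsp S \<Longrightarrow> x \<in> S \<Longrightarrow> y \<in> S \<Longrightarrow> (\<lambda>t. x t + y t) \<in> S"
  using subsp_comb[of S x y 1 1] by simp

lemma subsp_scale: "subsp S \<Longrightarrow> x \<in> S \<Longrightarrow> (\<lambda>t. a * x t) \<in> S"
  using subsp_comb[of S x x a 0] by simp

lemma subsp_diff: "subsp S \<Longrightarrow> x \<in> S \<Longrightarrow> y \<in> S \<Longrightarrow> (\<lambda>t. x t - y t) \<in> S"
  using subsp_comb[of S x y 1 "-1"] by simp

lemma subsp_uminus: "subsp S \<Longrightarrow> x \<in> S \<Longrightarrow> (\<lambda>t. - x t) \<in> S"
  using subsp_scale[of S x "-1"] by simp

lemma subsp_lc: assumes "subsp S" shows "finite F \<Longrightarrow> F \<subseteq> S \<Longrightarrow> lc F c \<in> S"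
proof (induction F rule: finite_induct)
  case empty then show ?case using assms by (simp add: lc_def subsp_zero)
next
  case (insert x F)
  have "lc (insert x F) c = (\<lambda>t. 1 * lc F c t + c x * x t)"
    using insert by (auto simp: lc_def)
  then show ?case using insert assms subsp_comb[of S "lc F c" x 1 "c x"] by auto
qed

lemma lc_insert_add:
  assumes "finite F"
  shows "\<exists>c'. (\<lambda>t. lc F c t + r * x t) = lc (insert x F) c'"
proof (cases "x \<in> F")
  case True
  define c' where "c' = c(x := c x + r)"
  have "lc (insert x F) c' = (\<lambda>t. lc F c t + r * x t)"
  proof
    fix t
    have "(\<Sum>f\<in>F. c' f * f t) = c' x * x t + (\<Sum>f\<in>F-{x}. c' f * f t)"
      using True assms by (simp add: sum.remove)
    also have "(\<Sum>f\<in>F-{x}. c' f * f t) = (\<Sum>f\<in>F-{x}. c f * f t)"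
      by (rule sum.cong) (auto simp: c'_def)
    also have "(\<Sum>f\<in>F. c f * f t) = c x * x t + (\<Sum>f\<in>F-{x}. c f * f t)"
      using True assms by (simp add: sum.remove)
    ultimately show "lc (insert x F) c' t = lc F c t + r * x t"
      using True by (simp add: lc_def insert_absorb c'_def algebra_simps)
  qed
  then show ?thesis by metis
next
  case False
  define c' where "c' = c(x := r)"
  have "lc (insert x F) c' = (\<lambda>t. lc F c t + r * x t)"
  proof
    fix t
    have "(\<Sum>f\<in>F. c' f * f t) = (\<Sum>f\<in>F. c f * f t)"
      by (rule sum.cong) (use False in \<open>auto simp: c'_def\<close>)
    then show "lc (insert x F) c' t = lc F c t + r * x t"
      using False assms by (simp add: lc_def c'_def)
  qed
  then show ?thesis by metis
qed

lemma lc_union: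
  assumes "finite F1" "finite F2"
  shows "\<exists>c. (\<lambda>t. lc F1 c1 t + lc F2 c2 t) = lc (F1 \<union> F2) c"
  using assms(2)
proof (induction F2 rule: finite_induct)
  case empty then show ?case by (auto simp: lc_def)
next
  case (insert x F)
  obtain c where c: "(\<lambda>t. lc F1 c1 t + lc F c2 t) = lc (F1 \<union> F) c"
    using insert by blast
  obtain c' where c': "(\<lambda>t. lc (F1 \<union> F) c t + c2 x * x t) = lc (insert x (F1 \<union> F)) c'"
    using lc_insert_add[of "F1 \<union> F" c "c2 x" x] assms insert by auto
  have "(\<lambda>t. lc F1 c1 t + lc (insert x F) c2 t) = (\<lambda>t. lc (F1 \<union> F) c t + c2 x * x t)"
  proof
    fix t
    have "lc (insert x F) c2 t = c2 x * x t + lc F c2 t"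
      using insert by (simp add: lc_def)
    then show "lc F1 c1 t + lc (insert x F) c2 t = lc (F1 \<union> F) c t + c2 x * x t"
      using fun_cong[OF c, of t] by simp
  qed
  then show ?case using c' by auto
qed

lemma lc_image:
  assumes "finite I"
  shows "\<exists>c. (\<lambda>t. \<Sum>i\<in>I. d i * h i t) = lc (h ` I) c"
  using assms
proof (induction I rule: finite_induct)
  case empty then show ?case by (auto simp: lc_def)
next
  case (insert x I)
  obtain c where c: "(\<lambda>t. \<Sum>i\<in>I. d i * h i t) = lc (h ` I) c" using insert by blast
  obtain c' where c': "(\<lambda>t. lc (h ` I) c t + d x * h x t) = lc (insert (h x) (h ` I)) c'"
    using lc_insert_add[of "h ` I" c "d x" "h x"] insert by auto
  have "(\<lambda>t. \<Sum>i\<in>insert x I. d i * h i t) = (\<lambda>t. lc (h ` I) c t + d x * h x t)"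
  proof
    fix t show "(\<Sum>i\<in>insert x I. d i * h i t) = lc (h ` I) c t + d x * h x t"
      using insert fun_cong[OF c, of t] by simp
  qed
  then show ?case using c' by auto
qed

definition rep :: "('x \<Rightarrow> real) set \<Rightarrow> ('x \<Rightarrow> real) set \<Rightarrow> ('x \<Rightarrow> real) \<Rightarrow> bool" where
  "rep B F s \<longleftrightarrow> (\<exists>w\<in>B. \<exists>c. s = (\<lambda>t. w t + lc F c t))"

lemma repI: "w \<in> B \<Longrightarrow> s = (\<lambda>t. w t + lc F c t) \<Longrightarrow> rep B F s"
  unfolding rep_def by blast

lemma lc_comb: "(\<lambda>t. a * lc F c1 t + b * lc F c2 t) = lc F (\<lambda>f. a * c1 f + b * c2 f)"
  by (auto simp: lc_def sum_distrib_left sum.distrib algebra_simps)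

lemma lc_comb_pt: "lc F (\<lambda>f. a * c1 f + b * c2 f) t = a * lc F c1 t + b * lc F c2 t"
  by (simp add: lc_def sum_distrib_left sum.distrib algebra_simps)

lemma lc_insert_notin: "finite F \<Longrightarrow> f \<notin> F \<Longrightarrow> lc (insert f F) c t = c f * f t + lc F c t"
  by (simp add: lc_def)

lemma rep_subsp:
  assumes "subsp B"
  shows "subsp {s. rep B F s}"
  unfolding subsp_def
proof safe
  show "rep B F (\<lambda>_. 0)" unfolding rep_def
    by (rule bexI[of _ "\<lambda>_. 0"]) (auto simp: lc_def assms subsp_zero intro: exI[of _ "\<lambda>_. 0"])
next
  fix x y :: "'a \<Rightarrow> real" and a b
  assume "rep B F x" "rep B F y"
  then obtain w1 c1 w2 c2 where h: "w1 \<in> B" "x = (\<lambda>t. w1 t + lc F c1 t)" "w2 \<in> B" "y = (\<lambda>t. w2 t + lc F c2 t)"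
    unfolding rep_def by blast
  have "(\<lambda>t. a * x t + b * y t) = (\<lambda>t. (a * w1 t + b * w2 t) + lc F (\<lambda>f. a * c1 f + b * c2 f) t)"
    unfolding h lc_comb_pt by (simp add: fun_eq_iff algebra_simps)
  then show "rep B F (\<lambda>t. a * x t + b * y t)"
    by (rule repI[OF subsp_comb[OF assms h(1) h(3), of a b]])
qed

lemma subsp_Int: "subsp A \<Longrightarrow> subsp B \<Longrightarrow> subsp (A \<inter> B)"
  by (simp add: subsp_def)

lemma span_reduce:
  assumes "finite F0" "subsp B"
  shows "subsp S \<Longrightarrow> (\<forall>s\<in>S. rep B F0 s) \<Longrightarrow> \<exists>F. finite F \<and> F \<subseteq> S \<and> (\<forall>s\<in>S. rep B F s)"
  using assms(1)
proof (induction F0 arbitrary: S rule: finite_induct)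
  case empty then show ?case by (intro exI[of _ "{}"]) auto
next
  case (insert f F S)
  show ?case
  proof (cases "\<forall>s\<in>S. rep B F s")
    case True from insert.IH[OF insert.prems(1) True] show ?thesis by blast
  next
    case False
    then obtain s0 where s0: "s0 \<in> S" "\<not> rep B F s0" by blast
    then obtain w0 c0 where w0: "w0 \<in> B" "s0 = (\<lambda>t. w0 t + lc (insert f F) c0 t)"
      using insert.prems unfolding rep_def by blast
    have s0e: "s0 t = w0 t + c0 f * f t + lc F c0 t" for t
      using w0 lc_insert_notin[OF insert.hyps(1,2)] by simp
    have c0f: "c0 f \<noteq> 0"
    proof
      assume "c0 f = 0"
      then have "s0 = (\<lambda>t. w0 t + lc F c0 t)" using s0e by auto
      then show False using s0 w0 unfolding rep_def by blast
    qed
    define S' where "S' = {s\<in>S. rep B F s}"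
    have "S' = S \<inter> {s. rep B F s}" by (auto simp: S'_def)
    then have sS': "subsp S'" using subsp_Int[OF insert.prems(1) rep_subsp[OF assms(2)]] by simp
    have rS': "\<forall>s\<in>S'. rep B F s" by (simp add: S'_def)
    from insert.IH[OF sS' rS'] obtain F' where F': "finite F'" "F' \<subseteq> S'" "\<forall>s\<in>S'. rep B F' s"
      by blast
    have "\<forall>s\<in>S. rep B (insert s0 F') s"
    proof
      fix s assume sS: "s \<in> S"
      then obtain w d where wd: "w \<in> B" "s = (\<lambda>t. w t + lc (insert f F) d t)"
        using insert.prems unfolding rep_def by blast
      define r where "r = d f / c0 f"
      define s' where "s' = (\<lambda>t. 1 * s t + (- r) * s0 t)"
      have s'S: "s' \<in> S" unfolding s'_def using subsp_comb[OF insert.prems(1) sS s0(1)] .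
      have "s' = (\<lambda>t. (1 * w t + (-r) * w0 t) + lc F (\<lambda>g. 1 * d g + (-r) * c0 g) t)"
      proof
        fix t
        have "d f = r * c0 f" using c0f by (simp add: r_def)
        then show "s' t = (1 * w t + (-r) * w0 t) + lc F (\<lambda>g. 1 * d g + (-r) * c0 g) t"
          unfolding lc_comb_pt s'_def s0e wd(2) lc_insert_notin[OF insert.hyps(1,2), of d t]
          by (simp add: algebra_simps)
      qed
      then have "rep B F s'" by (rule repI[OF subsp_comb[OF assms(2) wd(1) w0(1), of 1 "-r"]])
      then have "s' \<in> S'" using s'S by (simp add: S'_def)
      then obtain w' e where we: "w' \<in> B" "s' = (\<lambda>t. w' t + lc F' e t)" using F' unfolding rep_def by blast
      obtain e' where e': "(\<lambda>t. lc F' e t + r * s0 t) = lc (insert s0 F') e'"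
        using lc_insert_add[OF F'(1), of e r s0] by blast
      have "s = (\<lambda>t. w' t + lc (insert s0 F') e' t)"
      proof
        fix t
        show "s t = w' t + lc (insert s0 F') e' t"
          using fun_cong[OF e', of t, symmetric] fun_cong[OF we(2), of t] by (simp add: s'_def)
      qed
      then show "rep B (insert s0 F') s" by (rule repI[OF we(1)])
    qed
    moreover have "insert s0 F' \<subseteq> S" using F'(2) s0(1) by (auto simp: S'_def)
    ultimately show ?thesis using F'(1) by blast
  qed
qed

lemma subsp_sum:
  assumes B: "subsp B"
  shows "finite I \<Longrightarrow> \<forall>i\<in>I. g i \<in> B \<Longrightarrow> (\<lambda>t. \<Sum>i\<in>I. c i * g i t) \<in> B"
proof (induction I rule: finite_induct)
  case empty then show ?case using subsp_zero[OF B] by simp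
next
  case (insert x F)
  have h: "(\<lambda>t. \<Sum>i\<in>F. c i * g i t) \<in> B" using insert by simp
  have gx: "g x \<in> B" using insert.prems by simp
  have "(\<lambda>t. 1 * (\<Sum>i\<in>F. c i * g i t) + c x * g x t) \<in> B" by (rule subsp_comb[OF B h gx])
  then show ?case using insert.hyps by (simp add: add.commute)
qed

lemma sum_lin:
  assumes V: "subsp V" and B: "subsp B" and vV: "v \<in> V"
    and lin: "\<forall>v\<in>V. \<forall>w\<in>V. \<forall>a b. (\<lambda>t. T (\<lambda>u. a * v u + b * w u) t - a * T v t - b * T w t) \<in> B"
  shows "finite I \<Longrightarrow> \<forall>i\<in>I. h i \<in> V \<Longrightarrow> (\<lambda>t. v t - (\<Sum>i\<in>I. d i * h i t)) \<in> V
     \<and> (\<lambda>t. T (\<lambda>t. v t - (\<Sum>i\<in>I. d i * h i t)) t - (T v t - (\<Sum>i\<in>I. d i * T (h i) t))) \<in> B"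
proof (induction I rule: finite_induct)
  case empty
  have "(\<lambda>t. v t - (\<Sum>i\<in>{}. d i * h i t)) = v" by simp
  then show ?case using vV subsp_zero[OF B] by simp
next
  case (insert x I)
  define y where "y = (\<lambda>t. v t - (\<Sum>i\<in>I. d i * h i t))"
  have yV: "y \<in> V" and yB: "(\<lambda>t. T y t - (T v t - (\<Sum>i\<in>I. d i * T (h i) t))) \<in> B"
    using insert by (auto simp: y_def)
  have hx: "h x \<in> V" using insert by simp
  have eq: "(\<lambda>t. v t - (\<Sum>i\<in>insert x I. d i * h i t)) = (\<lambda>u. 1 * y u + (- d x) * h x u)"
    using insert.hyps by (simp add: y_def fun_eq_iff)
  have l: "(\<lambda>t. T (\<lambda>u. 1 * y u + (- d x) * h x u) t - 1 * T y t - (- d x) * T (h x) t) \<in> B"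
    using lin yV hx by blast
  have "(\<lambda>t. (T (\<lambda>u. 1 * y u + (- d x) * h x u) t - 1 * T y t - (- d x) * T (h x) t)
            + (T y t - (T v t - (\<Sum>i\<in>I. d i * T (h i) t)))) \<in> B"
    by (rule subsp_add[OF B l yB])
  moreover have "(\<lambda>t. (T (\<lambda>u. 1 * y u + (- d x) * h x u) t - 1 * T y t - (- d x) * T (h x) t)
            + (T y t - (T v t - (\<Sum>i\<in>I. d i * T (h i) t))))
     = (\<lambda>t. T (\<lambda>u. 1 * y u + (- d x) * h x u) t - (T v t - (\<Sum>i\<in>insert x I. d i * T (h i) t)))"
    using insert.hyps by (simp add: fun_eq_iff algebra_simps)
  ultimately show ?case unfolding eq using subsp_comb[OF V yV hx, of 1 "- d x"] by simp
qed

lemma pullback: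
  assumes V: "subsp V" and B: "subsp B" and TZ: "\<forall>v\<in>V. T v \<in> Z" and fd: "fin_dim_quot Z B"
    and lin: "\<forall>v\<in>V. \<forall>w\<in>V. \<forall>a b. (\<lambda>t. T (\<lambda>u. a * v u + b * w u) t - a * T v t - b * T w t) \<in> B"
  shows "\<exists>F. finite F \<and> F \<subseteq> V \<and> (\<forall>v\<in>V. \<exists>c. (\<lambda>t. v t - lc F c t) \<in> V \<and> T (\<lambda>t. v t - lc F c t) \<in> B)"
proof -
  obtain F0 where F0: "finite F0" "F0 \<subseteq> Z" "\<forall>z\<in>Z. rep B F0 z"
    using fd unfolding fin_dim_quot_def rep_def lc_def by blast
  define S where "S = {u. \<exists>v\<in>V. (\<lambda>t. u t - T v t) \<in> B}"
  have z: "(\<lambda>_. 0) \<in> V" using V by (rule subsp_zero)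
  have T0: "T (\<lambda>_. 0) \<in> B"
  proof -
    show ?thesis using lin[rule_format, OF z z, of 0 0] by simp
  qed
  have sS: "subsp S" unfolding subsp_def
  proof (intro conjI ballI allI)
    show "(\<lambda>_. 0) \<in> S" unfolding S_def using z subsp_uminus[OF B T0] by auto
  next
    fix x y a b assume "x \<in> S" "y \<in> S"
    then obtain v1 v2 where v: "v1 \<in> V" "(\<lambda>t. x t - T v1 t) \<in> B" "v2 \<in> V" "(\<lambda>t. y t - T v2 t) \<in> B"
      unfolding S_def by blast
    have l: "(\<lambda>t. T (\<lambda>u. a * v1 u + b * v2 u) t - a * T v1 t - b * T v2 t) \<in> B" using lin v by blast
    have "(\<lambda>t. (a * (x t - T v1 t) + b * (y t - T v2 t)) - (T (\<lambda>u. a * v1 u + b * v2 u) t - a * T v1 t - b * T v2 t)) \<in> B"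
      using subsp_diff[OF B subsp_comb[OF B v(2) v(4)] l] by simp
    moreover have "(\<lambda>t. (a * (x t - T v1 t) + b * (y t - T v2 t)) - (T (\<lambda>u. a * v1 u + b * v2 u) t - a * T v1 t - b * T v2 t))
       = (\<lambda>t. (a * x t + b * y t) - T (\<lambda>u. a * v1 u + b * v2 u) t)"
      by (simp add: fun_eq_iff algebra_simps)
    ultimately show "(\<lambda>t. a * x t + b * y t) \<in> S" unfolding S_def
      using subsp_comb[OF V v(1) v(3)] by auto
  qed
  have rS: "\<forall>s\<in>S. rep B F0 s"
  proof
    fix s assume "s \<in> S"
    then obtain v where v: "v \<in> V" "(\<lambda>t. s t - T v t) \<in> B" unfolding S_def by blast
    then obtain w c where wc: "w \<in> B" "T v = (\<lambda>t. w t + lc F0 c t)" using F0 TZ unfolding rep_def by blast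
    have "s = (\<lambda>t. (s t - T v t + w t) + lc F0 c t)" using wc by (simp add: fun_eq_iff)
    then show "rep B F0 s" using subsp_add[OF B v(2) wc(1)] by (rule repI[rotated])
  qed
  from span_reduce[OF F0(1) B sS rS] obtain F' where F': "finite F'" "F' \<subseteq> S" "\<forall>s\<in>S. rep B F' s"
    by blast
  have "\<forall>u\<in>F'. \<exists>v. v \<in> V \<and> (\<lambda>t. u t - T v t) \<in> B" using F'(2) unfolding S_def by blast
  from bchoice[OF this] obtain vv where vv: "\<forall>u\<in>F'. vv u \<in> V \<and> (\<lambda>t. u t - T (vv u) t) \<in> B" by blast
  have "\<forall>v\<in>V. \<exists>c. (\<lambda>t. v t - lc (vv ` F') c t) \<in> V \<and> T (\<lambda>t. v t - lc (vv ` F') c t) \<in> B"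
  proof
    fix v assume vV: "v \<in> V"
    have "T v \<in> S" unfolding S_def using vV subsp_zero[OF B] by (intro CollectI bexI[of _ v]) simp_all
    then obtain w c where wc: "w \<in> B" "T v = (\<lambda>t. w t + lc F' c t)" using F' unfolding rep_def by blast
    have sl: "(\<lambda>t. v t - (\<Sum>u\<in>F'. c u * vv u t)) \<in> V \<and>
       (\<lambda>t. T (\<lambda>t. v t - (\<Sum>u\<in>F'. c u * vv u t)) t - (T v t - (\<Sum>u\<in>F'. c u * T (vv u) t))) \<in> B"
      using sum_lin[OF V B vV lin F'(1)] vv by blast
    have Bsum: "(\<lambda>t. \<Sum>u\<in>F'. c u * (u t - T (vv u) t)) \<in> B"
      using subsp_sum[OF B F'(1), of "\<lambda>u t. u t - T (vv u) t" c] vv by simp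
    have "(\<lambda>t. (T (\<lambda>t. v t - (\<Sum>u\<in>F'. c u * vv u t)) t - (T v t - (\<Sum>u\<in>F'. c u * T (vv u) t)))
          + (w t + (\<Sum>u\<in>F'. c u * (u t - T (vv u) t)))) \<in> B"
      using subsp_add[OF B conjunct2[OF sl] subsp_add[OF B wc(1) Bsum]] .
    moreover have "(\<lambda>t. (T (\<lambda>t. v t - (\<Sum>u\<in>F'. c u * vv u t)) t - (T v t - (\<Sum>u\<in>F'. c u * T (vv u) t)))
          + (w t + (\<Sum>u\<in>F'. c u * (u t - T (vv u) t)))) = T (\<lambda>t. v t - (\<Sum>u\<in>F'. c u * vv u t))"
    proof
      fix t
      have "T v t = w t + (\<Sum>u\<in>F'. c u * u t)" using wc by (simp add: lc_def)
      then show "(T (\<lambda>t. v t - (\<Sum>u\<in>F'. c u * vv u t)) t - (T v t - (\<Sum>u\<in>F'. c u * T (vv u) t)))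
          + (w t + (\<Sum>u\<in>F'. c u * (u t - T (vv u) t))) = T (\<lambda>t. v t - (\<Sum>u\<in>F'. c u * vv u t)) t"
        by (simp add: right_diff_distrib sum_subtractf)
    qed
    ultimately have TB: "T (\<lambda>t. v t - (\<Sum>u\<in>F'. c u * vv u t)) \<in> B" by simp
    obtain c' where c': "(\<lambda>t. \<Sum>u\<in>F'. c u * vv u t) = lc (vv ` F') c'"
      using lc_image[OF F'(1), of c vv] by blast
    have eq: "(\<lambda>t. v t - (\<Sum>u\<in>F'. c u * vv u t)) = (\<lambda>t. v t - lc (vv ` F') c' t)"
      by (simp add: c'[symmetric])
    show "\<exists>c. (\<lambda>t. v t - lc (vv ` F') c t) \<in> V \<and> T (\<lambda>t. v t - lc (vv ` F') c t) \<in> B"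
      by (intro exI[of _ c'] conjI) (use sl TB eq in simp_all)
  qed
  moreover have "vv ` F' \<subseteq> V" using vv by blast
  ultimately show ?thesis using F'(1) by blast
qed

lemma seq_bound_lim:
  fixes a :: "nat \<Rightarrow> real"
  assumes "\<And>n. n \<ge> 1 \<Longrightarrow> \<bar>a n - r\<bar> \<le> C / real n"
  shows "a \<longlonglongrightarrow> r"
proof -
  have "(\<lambda>n. a n - r) \<longlonglongrightarrow> 0"
  proof (rule real_tendsto_sandwich[where f="\<lambda>n. - C / real n" and h="\<lambda>n. C / real n"])
    have lo: "- C / real n \<le> a n - r" "a n - r \<le> C / real n" if "n \<ge> 1" for n
      using assms[OF that] unfolding abs_le_iff by auto
    show "\<forall>\<^sub>F n in sequentially. - C / real n \<le> a n - r"
      using lo by (intro eventually_sequentiallyI[of 1]) auto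
    show "\<forall>\<^sub>F n in sequentially. a n - r \<le> C / real n"
      using lo by (intro eventually_sequentiallyI[of 1]) auto
    show "(\<lambda>n. - C / real n) \<longlonglongrightarrow> 0" using lim_const_over_n[of "-C"] by simp
    show "(\<lambda>n. C / real n) \<longlonglongrightarrow> 0" using lim_const_over_n[of "C"] by simp
  qed
  then show ?thesis using Lim_transform2 tendsto_const
    by (metis (no_types) LIM_zero_cancel)
qed

locale qmG = group G for G (structure) +
  fixes f :: "'a \<Rightarrow> real" and D :: real
  assumes qm: "x \<in> carrier G \<Longrightarrow> y \<in> carrier G \<Longrightarrow> \<bar>f (x \<otimes> y) - f x - f y\<bar> \<le> D"
begin

definition L :: "'a \<Rightarrow> real" where
  "L g = lim (\<lambda>n. f (g [^] n) / real n)"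

lemma f_one: "\<bar>f \<one>\<bar> \<le> D"
  using qm[of \<one> \<one>] by simp

lemma D_nonneg: "0 \<le> D"
  using f_one by linarith

lemma pow_bound: "x \<in> carrier G \<Longrightarrow> \<bar>f (x [^] (k::nat)) - real k * f x\<bar> \<le> real k * D + D"
proof (induction k)
  case 0 then show ?case using f_one by simp
next
  case (Suc k)
  have "\<bar>f (x [^] k \<otimes> x) - f (x [^] k) - f x\<bar> \<le> D" using qm Suc.prems by simp
  then show ?case using Suc by (simp add: algebra_simps abs_le_iff)
qed

lemma conv: "g \<in> carrier G \<Longrightarrow> (\<lambda>n. f (g [^] n) / real n) \<longlonglongrightarrow> L g"
proof -
  assume g: "g \<in> carrier G"
  define a where "a n = f (g [^] n) / real n" for n
  have key: "\<bar>a (n * m) - a n\<bar> \<le> 2 * D / real n" if "n \<ge> 1" "m \<ge> 1" for n m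
  proof -
    have "\<bar>f ((g [^] n) [^] m) - real m * f (g [^] n)\<bar> \<le> real m * D + D"
      using pow_bound g by simp
    then have b: "\<bar>f (g [^] (n * m)) - real m * f (g [^] n)\<bar> \<le> real m * D + D"
      using nat_pow_pow g by simp
    have nm: "real n > 0" "real m > 0" using that by auto
    have "a (n * m) - a n = (f (g [^] (n * m)) - real m * f (g [^] n)) / (real n * real m)"
      using nm by (simp add: a_def field_simps)
    then have "\<bar>a (n * m) - a n\<bar> = \<bar>f (g [^] (n * m)) - real m * f (g [^] n)\<bar> / (real n * real m)"
      using nm by (simp add: abs_divide)
    also have "\<dots> \<le> (real m * D + D) / (real n * real m)"
      using b nm by (intro divide_right_mono) auto
    also have "\<dots> \<le> (2 * real m * D) / (real n * real m)"
      using nm D_nonneg that mult_left_mono[of 1 "real m" D] by (intro divide_right_mono) auto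
    also have "\<dots> = 2 * D / real n" using nm by (simp add: field_simps)
    finally show ?thesis .
  qed
  have "Cauchy a"
  proof (rule CauchyI)
    fix e :: real assume e: "0 < e"
    obtain M :: nat where M: "real M > 4 * D / e" using reals_Archimedean2 by blast
    have "M \<ge> 1"
    proof (rule ccontr)
      assume "\<not> M \<ge> 1" then have "M = 0" by simp
      moreover have "0 \<le> 4 * D / e" using D_nonneg e by simp
      ultimately show False using M by simp
    qed
    have Me: "4 * D / real M < e" using M e \<open>M \<ge> 1\<close> by (simp add: field_simps)
    show "\<exists>M. \<forall>m\<ge>M. \<forall>n\<ge>M. norm (a m - a n) < e"
    proof (intro exI allI impI)
      fix m n assume mn: "m \<ge> M" "n \<ge> M"
      then have m1: "m \<ge> 1" and n1: "n \<ge> 1" using \<open>M \<ge> 1\<close> by auto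
      have "\<bar>a (m * n) - a m\<bar> \<le> 2 * D / real m" using key m1 n1 by blast
      moreover have "\<bar>a (n * m) - a n\<bar> \<le> 2 * D / real n" using key m1 n1 by blast
      moreover have "2 * D / real m \<le> 2 * D / real M" "2 * D / real n \<le> 2 * D / real M"
        using mn \<open>M \<ge> 1\<close> D_nonneg by (auto intro!: divide_left_mono)
      ultimately have "\<bar>a m - a n\<bar> \<le> 4 * D / real M" by (simp add: mult.commute abs_le_iff)
      then show "norm (a m - a n) < e" using Me by simp
    qed
  qed
  then have "convergent a" by (rule Cauchy_convergent)
  then show ?thesis unfolding a_def L_def convergent_LIMSEQ_iff .
qed

lemma L_unique:
  assumes g: "g \<in> carrier G" and b: "\<And>n. \<bar>f (g [^] (n::nat)) - real n * r\<bar> \<le> C"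
  shows "L g = r"
proof -
  have "(\<lambda>n. f (g [^] n) / real n) \<longlonglongrightarrow> r"
  proof (rule seq_bound_lim[where C=C])
    fix n :: nat assume n: "n \<ge> 1"
    have "f (g [^] n) / real n - r = (f (g [^] n) - real n * r) / real n" using n by (simp add: field_simps)
    then have "\<bar>f (g [^] n) / real n - r\<bar> = \<bar>f (g [^] n) - real n * r\<bar> / real n" by (simp add: abs_divide)
    also have "\<dots> \<le> C / real n" using b n by (intro divide_right_mono) auto
    finally show "\<bar>f (g [^] n) / real n - r\<bar> \<le> C / real n" .
  qed
  then show ?thesis using conv[OF g] LIMSEQ_unique by blast
qed

lemma L_close_pow:
  assumes g: "g \<in> carrier G"
  shows "\<bar>f (g [^] (k::nat)) - real k * L g\<bar> \<le> D"
proof (cases "k = 0")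
  case True then show ?thesis using f_one by simp
next
  case False
  then have k: "real k > 0" by simp
  have sm: "strict_mono (\<lambda>n. k * n)" using False by (simp add: strict_mono_def)
  have X: "(\<lambda>n. f (g [^] (k * n)) / real (k * n)) \<longlonglongrightarrow> L g"
    using LIMSEQ_subseq_LIMSEQ[OF conv[OF g] sm] by (simp add: o_def)
  have Y: "(\<lambda>n. \<bar>f (g [^] (k * n)) / real (k * n) - f (g [^] k) / real k\<bar>) \<longlonglongrightarrow> \<bar>L g - f (g [^] k) / real k\<bar>"
    by (intro tendsto_intros X)
  have Z: "(\<lambda>n. D / real k + (D / real k) / real n) \<longlonglongrightarrow> D / real k + 0"
    by (intro tendsto_intros)
  have le: "\<bar>f (g [^] (k * n)) / real (k * n) - f (g [^] k) / real k\<bar> \<le> D / real k + (D / real k) / real n"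
    if n: "n \<ge> 1" for n
  proof -
    have b: "\<bar>f ((g [^] k) [^] n) - real n * f (g [^] k)\<bar> \<le> real n * D + D"
      using pow_bound g by simp
    then have b: "\<bar>f (g [^] (k * n)) - real n * f (g [^] k)\<bar> \<le> real n * D + D"
      using nat_pow_pow g by simp
    have nn: "real n > 0" using n by simp
    have "f (g [^] (k * n)) / real (k * n) - f (g [^] k) / real k
          = (f (g [^] (k * n)) - real n * f (g [^] k)) / (real k * real n)"
      using nn k by (simp add: field_simps)
    then have "\<bar>f (g [^] (k * n)) / real (k * n) - f (g [^] k) / real k\<bar>
          = \<bar>f (g [^] (k * n)) - real n * f (g [^] k)\<bar> / (real k * real n)"
      by (simp add: abs_divide)
    also have "\<dots> \<le> (real n * D + D) / (real k * real n)"
      using b nn k by (intro divide_right_mono) auto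
    also have "\<dots> = D / real k + (D / real k) / real n" using nn k by (simp add: field_simps)
    finally show ?thesis .
  qed
  have "\<bar>L g - f (g [^] k) / real k\<bar> \<le> D / real k + 0"
    using LIMSEQ_le[OF Y Z] le by blast
  then have "\<bar>L g - f (g [^] k) / real k\<bar> * real k \<le> D" using k by (simp add: field_simps)
  moreover have "\<bar>L g - f (g [^] k) / real k\<bar> * real k = \<bar>f (g [^] k) - real k * L g\<bar>"
  proof -
    have "(L g - f (g [^] k) / real k) * real k = - (f (g [^] k) - real k * L g)" using k by (simp add: field_simps)
    then have "\<bar>(L g - f (g [^] k) / real k) * real k\<bar> = \<bar>f (g [^] k) - real k * L g\<bar>" by simp
    then show ?thesis using k by (simp add: abs_mult)
  qed
  ultimately show ?thesis by simp
qed

lemma L_approx: "g \<in> carrier G \<Longrightarrow> \<bar>f g - L g\<bar> \<le> D"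
  using L_close_pow[of g 1] by simp

lemma L_qm: "x \<in> carrier G \<Longrightarrow> y \<in> carrier G \<Longrightarrow> \<bar>L (x \<otimes> y) - L x - L y\<bar> \<le> 4 * D"
  using L_approx[of x] L_approx[of y] L_approx[of "x \<otimes> y"] qm[of x y] unfolding abs_le_iff by simp

lemma L_pow_nat:
  assumes g: "g \<in> carrier G" shows "L (g [^] (m::nat)) = real m * L g"
proof (rule L_unique)
  show "g [^] m \<in> carrier G" using g by simp
  fix n :: nat
  show "\<bar>f ((g [^] m) [^] n) - real n * (real m * L g)\<bar> \<le> D"
  proof -
    have e1: "(g [^] m) [^] n = g [^] (m * n)" using g by (simp add: nat_pow_pow)
    have e2: "real n * (real m * L g) = real (m * n) * L g" by simp
    show ?thesis unfolding e1 e2 using L_close_pow[OF g, of "m * n"] .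
  qed
qed

lemma L_inv:
  assumes g: "g \<in> carrier G" shows "L (inv g) = - L g"
proof (rule L_unique)
  show "inv g \<in> carrier G" using g by simp
  fix n :: nat
  have a: "\<bar>f \<one> - f (g [^] n) - f (inv (g [^] n))\<bar> \<le> D"
    using qm[of "g [^] n" "inv (g [^] n)"] g by simp
  have c: "\<bar>f (g [^] n) - real n * L g\<bar> \<le> D" using L_close_pow[OF g, of n] .
  have "f (inv g [^] n) = f (inv (g [^] n))" using nat_pow_inv[OF g, of n] by simp
  then show "\<bar>f (inv g [^] n) - real n * - L g\<bar> \<le> 3 * D"
    using a f_one c unfolding abs_le_iff by linarith
qed

lemma L_int_pow:
  assumes g: "g \<in> carrier G" shows "L (g [^] (k::int)) = of_int k * L g"
proof (cases "k < 0")
  case True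
  then have e: "g [^] k = inv (g [^] (nat (-k)))" unfolding int_pow_def2 by simp
  have "L (inv (g [^] (nat (-k)))) = - L (g [^] (nat (-k)))" using g by (intro L_inv) simp
  also have "\<dots> = - (real (nat (-k)) * L g)" using L_pow_nat[OF g] by simp
  also have "\<dots> = of_int k * L g" using True by simp
  finally show ?thesis unfolding e .
next
  case False
  then have e: "g [^] k = g [^] (nat k)" unfolding int_pow_def2 by simp
  have "L (g [^] (nat k)) = real (nat k) * L g" using L_pow_nat[OF g] .
  also have "\<dots> = of_int k * L g" using False by simp
  finally show ?thesis unfolding e .
qed

lemma conj_pow: "h \<in> carrier G \<Longrightarrow> x \<in> carrier G \<Longrightarrow> (h \<otimes> x \<otimes> inv h) [^] (n::nat) = h \<otimes> x [^] n \<otimes> inv h"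
proof (induction n)
  case 0 then show ?case by simp
next
  case (Suc n)
  have "(h \<otimes> x [^] n \<otimes> inv h) \<otimes> (h \<otimes> x \<otimes> inv h) = h \<otimes> (x [^] n \<otimes> x) \<otimes> inv h"
  proof -
    have c: "inv h \<otimes> (h \<otimes> z) = z" if "z \<in> carrier G" for z
      using Suc.prems that by (simp add: m_assoc[symmetric])
    show ?thesis using Suc.prems by (simp add: m_assoc c)
  qed
  then show ?case using Suc by simp
qed

lemma L_conj:
  assumes h: "h \<in> carrier G" and x: "x \<in> carrier G"
  shows "L (h \<otimes> x \<otimes> inv h) = L x"
proof (rule L_unique)
  show "h \<otimes> x \<otimes> inv h \<in> carrier G" using h x by simp
  fix n :: nat
  have xn: "x [^] n \<in> carrier G" using x by simp
  have a: "\<bar>f (h \<otimes> (x [^] n \<otimes> inv h)) - f h - f (x [^] n \<otimes> inv h)\<bar> \<le> D"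
    using qm h xn by simp
  have b: "\<bar>f (x [^] n \<otimes> inv h) - f (x [^] n) - f (inv h)\<bar> \<le> D"
    using qm h xn by simp
  have e: "h \<otimes> x [^] n \<otimes> inv h = h \<otimes> (x [^] n \<otimes> inv h)" using h xn by (simp add: m_assoc)
  have c: "\<bar>f (x [^] n) - real n * L x\<bar> \<le> D" using L_close_pow[OF x] .
  have "f ((h \<otimes> x \<otimes> inv h) [^] n) = f (h \<otimes> (x [^] n \<otimes> inv h))" using conj_pow[OF h x, of n] e by simp
  then show "\<bar>f ((h \<otimes> x \<otimes> inv h) [^] n) - real n * L x\<bar> \<le> 3 * D + \<bar>f h\<bar> + \<bar>f (inv h)\<bar>"
    using a b c unfolding abs_le_iff by linarith
qed


end

lemma sum_lin_aux:
  "(\<Sum>i<n. (-1::real) ^ (i + 1) * (a * f (h i) + b * g (h i)))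
     = a * (\<Sum>i<n. (-1) ^ (i + 1) * f (h i)) + b * (\<Sum>i<n. (-1) ^ (i + 1) * g (h i))"
proof -
  have "(\<Sum>i<n. (-1::real) ^ (i + 1) * (a * f (h i) + b * g (h i)))
     = (\<Sum>i<n. a * ((-1) ^ (i + 1) * f (h i)) + b * ((-1) ^ (i + 1) * g (h i)))"
    by (rule sum.cong) (simp_all add: ring_distribs mult.left_commute)
  also have "\<dots> = a * (\<Sum>i<n. (-1) ^ (i + 1) * f (h i)) + b * (\<Sum>i<n. (-1) ^ (i + 1) * g (h i))"
    by (simp only: sum.distrib sum_distrib_left)
  finally show ?thesis .
qed

lemma coboundary_lin:
  "coboundary \<Gamma> n (\<lambda>xs. a * f xs + b * g xs) = (\<lambda>xs. a * coboundary \<Gamma> n f xs + b * coboundary \<Gamma> n g xs)"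
proof
  fix xs
  show "coboundary \<Gamma> n (\<lambda>xs. a * f xs + b * g xs) xs = a * coboundary \<Gamma> n f xs + b * coboundary \<Gamma> n g xs"
  proof (cases "length xs = Suc n \<and> set xs \<subseteq> carrier \<Gamma>")
    case False then show ?thesis unfolding coboundary_def if_not_P[OF False] by simp
  next
    case True
    define h where "h i = take i xs @ [xs ! i \<otimes>\<^bsub>\<Gamma>\<^esub> xs ! (i + 1)] @ drop (i + 2) xs" for i
    have e: "coboundary \<Gamma> n F xs = F (tl xs) + (\<Sum>i<n. (-1) ^ (i + 1) * F (h i)) + (-1) ^ (n + 1) * F (butlast xs)" for F
      unfolding coboundary_def if_P[OF True] h_def by (rule refl)
    show ?thesis unfolding e sum_lin_aux by (simp add: ring_distribs)
  qed
qed

lemma coboundary_eval1: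
  "A \<in> carrier \<Gamma> \<Longrightarrow> B \<in> carrier \<Gamma> \<Longrightarrow>
   coboundary \<Gamma> 1 f [A, B] = f [B] - f [A \<otimes>\<^bsub>\<Gamma>\<^esub> B] + f [A]"
  unfolding coboundary_def by simp

lemma coboundary_eval2:
  "A \<in> carrier \<Gamma> \<Longrightarrow> B \<in> carrier \<Gamma> \<Longrightarrow> C \<in> carrier \<Gamma> \<Longrightarrow>
   coboundary \<Gamma> 2 f [A, B, C] = f [B, C] - f [A \<otimes>\<^bsub>\<Gamma>\<^esub> B, C] + f [A, B \<otimes>\<^bsub>\<Gamma>\<^esub> C] - f [A, B]"
  unfolding coboundary_def by (simp add: numeral_2_eq_2 lessThan_Suc)

lemma coboundary_eval3:
  "A \<in> carrier \<Gamma> \<Longrightarrow> B \<in> carrier \<Gamma> \<Longrightarrow> C \<in> carrier \<Gamma> \<Longrightarrow> D \<in> carrier \<Gamma> \<Longrightarrow>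
   coboundary \<Gamma> 3 f [A, B, C, D] = f [B, C, D] - f [A \<otimes>\<^bsub>\<Gamma>\<^esub> B, C, D] + f [A, B \<otimes>\<^bsub>\<Gamma>\<^esub> C, D]
      - f [A, B, C \<otimes>\<^bsub>\<Gamma>\<^esub> D] + f [A, B, C]"
  unfolding coboundary_def by (simp add: numeral_3_eq_3 lessThan_Suc)

lemma coboundary_cochains: "coboundary \<Gamma> n f \<in> cochains \<Gamma> (Suc n)"
  unfolding cochains_def coboundary_def by auto

lemma length2_cases: "length xs = 2 \<Longrightarrow> \<exists>A B. xs = [A, B]"
  by (auto simp: numeral_eq_Suc length_Suc_conv)

lemma length3_cases: "length xs = 3 \<Longrightarrow> \<exists>A B C. xs = [A, B, C]"
  by (auto simp: numeral_eq_Suc length_Suc_conv)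

lemma length4_cases: "length xs = 4 \<Longrightarrow> \<exists>A B C D. xs = [A, B, C, D]"
  by (auto simp: numeral_eq_Suc length_Suc_conv)

lemma (in monoid) dd_zero: "coboundary G 3 (coboundary G 2 f) = (\<lambda>_. 0)"
proof
  fix xs
  show "coboundary G 3 (coboundary G 2 f) xs = 0"
  proof (cases "length xs = 4 \<and> set xs \<subseteq> carrier G")
    case False
    then show ?thesis unfolding coboundary_def[of G 3] by auto
  next
    case True
    then obtain A B C D where xs: "xs = [A, B, C, D]" using length4_cases by blast
    then have c: "A \<in> carrier G" "B \<in> carrier G" "C \<in> carrier G" "D \<in> carrier G" using True by auto
    show ?thesis unfolding xs using c
      by (simp add: coboundary_eval3 coboundary_eval2 m_assoc)
  qed
qed

lemma subsp_cochains: "subsp (cochains \<Gamma> n)"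
  unfolding subsp_def
proof (intro conjI ballI allI)
  show "(\<lambda>_. 0) \<in> cochains \<Gamma> n" by (simp add: cochains_def)
next
  fix x y :: "'a list \<Rightarrow> real" and a b
  assume x: "x \<in> cochains \<Gamma> n" and y: "y \<in> cochains \<Gamma> n"
  show "(\<lambda>t. a * x t + b * y t) \<in> cochains \<Gamma> n" unfolding cochains_def
  proof (intro CollectI allI impI)
    fix xs assume "a * x xs + b * y xs \<noteq> 0"
    then have "x xs \<noteq> 0 \<or> y xs \<noteq> 0" by auto
    then show "length xs = n \<and> set xs \<subseteq> carrier \<Gamma>" using x y unfolding cochains_def by blast
  qed
qed

lemma bounded_comb:
  fixes x y :: "'a \<Rightarrow> real"
  assumes "\<forall>xs. \<bar>x xs\<bar> \<le> C1" "\<forall>xs. \<bar>y xs\<bar> \<le> C2"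
  shows "\<exists>C. \<forall>xs. \<bar>a * x xs + b * y xs\<bar> \<le> C"
proof (intro exI allI)
  fix xs
  have "\<bar>a * x xs + b * y xs\<bar> \<le> \<bar>a\<bar> * \<bar>x xs\<bar> + \<bar>b\<bar> * \<bar>y xs\<bar>"
    using abs_triangle_ineq[of "a * x xs" "b * y xs"] by (simp add: abs_mult)
  also have "\<dots> \<le> \<bar>a\<bar> * C1 + \<bar>b\<bar> * C2"
    using assms by (intro add_mono mult_left_mono) auto
  finally show "\<bar>a * x xs + b * y xs\<bar> \<le> \<bar>a\<bar> * C1 + \<bar>b\<bar> * C2" .
qed

lemma subsp_bounded_cochains: "subsp (bounded_cochains \<Gamma> n)"
  unfolding subsp_def bounded_cochains_def
proof (intro conjI ballI allI)
  show "(\<lambda>_. 0) \<in> {f \<in> cochains \<Gamma> n. \<exists>C. \<forall>xs. \<bar>f xs\<bar> \<le> C}"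
    using subsp_zero[OF subsp_cochains] by auto
next
  fix x y a b assume x: "x \<in> {f \<in> cochains \<Gamma> n. \<exists>C. \<forall>xs. \<bar>f xs\<bar> \<le> C}"
    and y: "y \<in> {f \<in> cochains \<Gamma> n. \<exists>C. \<forall>xs. \<bar>f xs\<bar> \<le> C}"
  then obtain C1 C2 where "\<forall>xs. \<bar>x xs\<bar> \<le> C1" "\<forall>xs. \<bar>y xs\<bar> \<le> C2" by auto
  then have "\<exists>C. \<forall>xs. \<bar>a * x xs + b * y xs\<bar> \<le> C" by (rule bounded_comb)
  moreover have "(\<lambda>t. a * x t + b * y t) \<in> cochains \<Gamma> n"
    using x y subsp_comb[OF subsp_cochains] by auto
  ultimately show "(\<lambda>t. a * x t + b * y t) \<in> {f \<in> cochains \<Gamma> n. \<exists>C. \<forall>xs. \<bar>f xs\<bar> \<le> C}" by auto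
qed

lemma subsp_preimage:
  assumes V: "subsp V" and B: "subsp B"
    and lin: "\<forall>v\<in>V. \<forall>w\<in>V. \<forall>a b. T (\<lambda>t. a * v t + b * w t) = (\<lambda>t. a * T v t + b * T w t)"
  shows "subsp {v\<in>V. T v \<in> B}"
  unfolding subsp_def
proof (intro conjI ballI allI)
  have z: "(\<lambda>_. 0) \<in> V" using V by (rule subsp_zero)
  have "T (\<lambda>_. 0) = (\<lambda>_. 0)" using lin[rule_format, OF z z, of 0 0] by simp
  then show "(\<lambda>_. 0) \<in> {v \<in> V. T v \<in> B}" using z subsp_zero[OF B] by simp
next
  fix x y a b assume "x \<in> {v \<in> V. T v \<in> B}" "y \<in> {v \<in> V. T v \<in> B}"
  then have h: "x \<in> V" "y \<in> V" "T x \<in> B" "T y \<in> B" by auto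
  have "T (\<lambda>t. a * x t + b * y t) = (\<lambda>t. a * T x t + b * T y t)" using lin h(1,2) by blast
  then show "(\<lambda>t. a * x t + b * y t) \<in> {v \<in> V. T v \<in> B}"
    using subsp_comb[OF V h(1,2)] subsp_comb[OF B h(3,4)] by simp
qed

lemma subsp_cocycles: "subsp (cocycles \<Gamma> n)"
proof -
  have "cocycles \<Gamma> n = {v \<in> cochains \<Gamma> n. coboundary \<Gamma> n v \<in> {\<lambda>_. 0}}"
    by (auto simp: cocycles_def)
  moreover have "subsp {v \<in> cochains \<Gamma> n. coboundary \<Gamma> n v \<in> {\<lambda>_. 0}}"
    by (rule subsp_preimage[OF subsp_cochains]) (auto simp: subsp_def coboundary_lin)
  ultimately show ?thesis by simp
qed

lemma subsp_bounded_cocycles: "subsp (bounded_cocycles \<Gamma> n)"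
proof -
  have "bounded_cocycles \<Gamma> n = {v \<in> bounded_cochains \<Gamma> n. coboundary \<Gamma> n v \<in> {\<lambda>_. 0}}"
    by (auto simp: bounded_cocycles_def)
  moreover have "subsp {v \<in> bounded_cochains \<Gamma> n. coboundary \<Gamma> n v \<in> {\<lambda>_. 0}}"
    by (rule subsp_preimage[OF subsp_bounded_cochains]) (auto simp: subsp_def coboundary_lin)
  ultimately show ?thesis by simp
qed

lemma subsp_image:
  assumes V: "subsp V"
    and lin: "\<forall>v\<in>V. \<forall>w\<in>V. \<forall>a b. T (\<lambda>t. a * v t + b * w t) = (\<lambda>t. a * T v t + b * T w t)"
  shows "subsp (T ` V)"
  unfolding subsp_def
proof (intro conjI ballI allI)
  have z: "(\<lambda>_. 0) \<in> V" using V by (rule subsp_zero)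
  have "T (\<lambda>_. 0) = (\<lambda>_. 0)" using lin[rule_format, OF z z, of 0 0] by simp
  then show "(\<lambda>_. 0) \<in> T ` V" using z by (intro image_eqI[of _ T "\<lambda>_. 0"]) auto
next
  fix x y a b assume "x \<in> T ` V" "y \<in> T ` V"
  then obtain v w where h: "v \<in> V" "w \<in> V" "x = T v" "y = T w" by blast
  have "T (\<lambda>t. a * v t + b * w t) = (\<lambda>t. a * T v t + b * T w t)" using lin h(1,2) by blast
  then show "(\<lambda>t. a * x t + b * y t) \<in> T ` V"
    using subsp_comb[OF V h(1,2)] h(3,4) by (intro image_eqI[of _ T "\<lambda>t. a * v t + b * w t"]) auto
qed

lemma coboundaries_Suc: "coboundaries \<Gamma> (Suc m) = coboundary \<Gamma> m ` cochains \<Gamma> m"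
  by (simp add: coboundaries_def)

lemma bounded_coboundaries_Suc: "bounded_coboundaries \<Gamma> (Suc m) = coboundary \<Gamma> m ` bounded_cochains \<Gamma> m"
  by (simp add: bounded_coboundaries_def)

lemma subsp_coboundaries: "subsp (coboundaries \<Gamma> (Suc m))"
  unfolding coboundaries_Suc by (rule subsp_image[OF subsp_cochains]) (simp add: coboundary_lin)

lemma subsp_bounded_coboundaries: "subsp (bounded_coboundaries \<Gamma> (Suc m))"
  unfolding bounded_coboundaries_Suc by (rule subsp_image[OF subsp_bounded_cochains]) (simp add: coboundary_lin)

lemma subsp_sumset:
  assumes A: "subsp A" and B: "subsp B"
  shows "subsp {(\<lambda>x. a x + b x) | a b. a \<in> A \<and> b \<in> B}"
  unfolding subsp_def
proof (intro conjI ballI allI)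
  show "(\<lambda>_. 0) \<in> {(\<lambda>x. a x + b x) | a b. a \<in> A \<and> b \<in> B}"
    using subsp_zero[OF A] subsp_zero[OF B] by (intro CollectI exI[of _ "\<lambda>_. 0"] conjI) auto
next
  fix x y :: "'a \<Rightarrow> real" and c d
  assume "x \<in> {(\<lambda>x. a x + b x) | a b. a \<in> A \<and> b \<in> B}" "y \<in> {(\<lambda>x. a x + b x) | a b. a \<in> A \<and> b \<in> B}"
  then obtain a1 b1 a2 b2 where h: "a1 \<in> A" "b1 \<in> B" "x = (\<lambda>x. a1 x + b1 x)" "a2 \<in> A" "b2 \<in> B" "y = (\<lambda>x. a2 x + b2 x)"
    by (auto simp only: mem_Collect_eq)
  have "(\<lambda>t. c * x t + d * y t) = (\<lambda>t. (\<lambda>t. c * a1 t + d * a2 t) t + (\<lambda>t. c * b1 t + d * b2 t) t)"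
    unfolding h by (simp add: fun_eq_iff distrib_left)
  moreover have "(\<lambda>t. c * a1 t + d * a2 t) \<in> A" using subsp_comb[OF A h(1) h(4)] .
  moreover have "(\<lambda>t. c * b1 t + d * b2 t) \<in> B" using subsp_comb[OF B h(2) h(5)] .
  ultimately show "(\<lambda>t. c * x t + d * y t) \<in> {(\<lambda>x. a x + b x) | a b. a \<in> A \<and> b \<in> B}"
    by (intro CollectI exI conjI)
qed

lemma fin_dim_quot_mono:
  assumes "fin_dim_quot V W" "W \<subseteq> W'" shows "fin_dim_quot V W'"
proof -
  obtain F where F: "finite F" "F \<subseteq> V" "\<forall>v\<in>V. \<exists>w\<in>W. \<exists>c. v = (\<lambda>x. w x + (\<Sum>f\<in>F. c f * f x))"
    using assms(1) unfolding fin_dim_quot_def by blast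
  have "\<forall>v\<in>V. \<exists>w\<in>W'. \<exists>c. v = (\<lambda>x. w x + (\<Sum>f\<in>F. c f * f x))"
  proof
    fix v assume "v \<in> V"
    then obtain w c where "w \<in> W" "v = (\<lambda>x. w x + (\<Sum>f\<in>F. c f * f x))" using F(3) by blast
    then show "\<exists>w\<in>W'. \<exists>c. v = (\<lambda>x. w x + (\<Sum>f\<in>F. c f * f x))" using assms(2) by blast
  qed
  then show ?thesis unfolding fin_dim_quot_def using F(1,2) by blast
qed

definition sec :: "'a set \<Rightarrow> 'a" where "sec A = (SOME g. g \<in> A)"

definition psi :: "('a, 'b) monoid_scheme \<Rightarrow> 'a set \<Rightarrow> ('a \<Rightarrow> real) \<Rightarrow> 'a \<Rightarrow> real" where
  "psi G H \<phi> g = \<phi> (g \<otimes>\<^bsub>G\<^esub> inv\<^bsub>G\<^esub> (sec (H #>\<^bsub>G\<^esub> g)))"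

definition cc :: "('a, 'b) monoid_scheme \<Rightarrow> 'a set \<Rightarrow> ('a \<Rightarrow> real) \<Rightarrow> 'a set list \<Rightarrow> real" where
  "cc G H \<phi> xs = (if length xs = 2 \<and> set xs \<subseteq> carrier (G Mod H) then
      psi G H \<phi> (sec (xs ! 0)) - psi G H \<phi> (sec (xs ! 0) \<otimes>\<^bsub>G\<^esub> sec (xs ! 1)) + psi G H \<phi> (sec (xs ! 1))
    else 0)"

lemma psi_lin: "psi G H (\<lambda>x. a * \<phi>1 x + b * \<phi>2 x) g = a * psi G H \<phi>1 g + b * psi G H \<phi>2 g"
  by (simp add: psi_def)

lemma cc_lin: "cc G H (\<lambda>x. a * \<phi>1 x + b * \<phi>2 x) = (\<lambda>xs. a * cc G H \<phi>1 xs + b * cc G H \<phi>2 xs)"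
  by (simp add: fun_eq_iff cc_def psi_lin algebra_simps)

lemma cc_cochains: "cc G H \<phi> \<in> cochains (G Mod H) 2"
  unfolding cochains_def cc_def by auto

lemma cc_eval: "A \<in> carrier (G Mod H) \<Longrightarrow> B \<in> carrier (G Mod H) \<Longrightarrow>
  cc G H \<phi> [A, B] = psi G H \<phi> (sec A) - psi G H \<phi> (sec A \<otimes>\<^bsub>G\<^esub> sec B) + psi G H \<phi> (sec B)"
  by (simp add: cc_def)

context normal
begin

lemma Mod_carrier: "carrier (G Mod H) = rcosets H"
  by (simp add: FactGroup_def)

lemma sec_props:
  assumes "A \<in> carrier (G Mod H)"
  shows "sec A \<in> carrier G" "sec A \<in> A" "H #> sec A = A"
proof -
  obtain a where a: "a \<in> carrier G" "A = H #> a" using assms unfolding Mod_carrier RCOSETS_def by blast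
  have "a \<in> A" using a rcos_self[OF a(1) subgroup_axioms] by simp
  then show s: "sec A \<in> A" unfolding sec_def by (rule someI)
  then show "sec A \<in> carrier G" using a elemrcos_carrier[OF is_group a(1)] by simp
  show "H #> sec A = A" using repr_independence[of "sec A" H a] s a subgroup_axioms by simp
qed

lemma pi_car: "g \<in> carrier G \<Longrightarrow> H #> g \<in> carrier (G Mod H)"
  unfolding Mod_carrier by (rule rcosetsI[OF subset])

lemma pi_mult: "g \<in> carrier G \<Longrightarrow> h \<in> carrier G \<Longrightarrow> (H #> g) \<otimes>\<^bsub>G Mod H\<^esub> (H #> h) = H #> (g \<otimes> h)"
  by (simp add: rcos_sum)

lemma coset_rep: "g \<in> carrier G \<Longrightarrow> g \<otimes> inv (sec (H #> g)) \<in> H"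
proof -
  assume g: "g \<in> carrier G"
  have A: "H #> g \<in> carrier (G Mod H)" using pi_car g .
  have "g \<in> H #> sec (H #> g)" using sec_props(3)[OF A] rcos_self[OF g subgroup_axioms] by simp
  then show ?thesis using rcos_module_imp[OF is_group sec_props(1)[OF A]] by simp
qed

lemma coset_left: "n \<in> H \<Longrightarrow> g \<in> carrier G \<Longrightarrow> H #> (n \<otimes> g) = H #> g"
  using repr_independence[of "n \<otimes> g" H g] rcosI[of n H g] subset subgroup_axioms by simp

lemma coset_H: "n \<in> H \<Longrightarrow> H #> n = H"
  using rcos_const[OF is_group] by simp

lemma cancel1: "x \<in> carrier G \<Longrightarrow> y \<in> carrier G \<Longrightarrow> inv x \<otimes> (x \<otimes> y) = y"
  by (simp add: m_assoc[symmetric])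

lemma cancel2: "x \<in> carrier G \<Longrightarrow> y \<in> carrier G \<Longrightarrow> x \<otimes> (inv x \<otimes> y) = y"
  by (simp add: m_assoc[symmetric])

definition qmH :: "('a \<Rightarrow> real) \<Rightarrow> real \<Rightarrow> bool" where
  "qmH \<phi> D \<longleftrightarrow> (\<forall>x\<in>H. \<forall>y\<in>H. \<bar>\<phi> (x \<otimes> y) - \<phi> x - \<phi> y\<bar> \<le> D)"

lemma psi_gen:
  assumes q: "qmH \<phi> D" and n: "n \<in> H" and g: "g \<in> carrier G"
  shows "\<bar>psi G H \<phi> (n \<otimes> g) - \<phi> n - psi G H \<phi> g\<bar> \<le> D"
proof -
  define s where "s = sec (H #> g)"
  have sc: "s \<in> carrier G" unfolding s_def using sec_props(1)[OF pi_car[OF g]] .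
  have m: "g \<otimes> inv s \<in> H" unfolding s_def using coset_rep[OF g] .
  have "psi G H \<phi> (n \<otimes> g) = \<phi> (n \<otimes> (g \<otimes> inv s))"
    unfolding psi_def coset_left[OF n g] s_def[symmetric] using n g sc by (simp add: m_assoc)
  moreover have "psi G H \<phi> g = \<phi> (g \<otimes> inv s)" unfolding psi_def s_def ..
  ultimately show ?thesis using q n m unfolding qmH_def by simp
qed

lemma E1:
  assumes q: "qmH \<phi> D" and inv: "\<forall>g\<in>carrier G. \<forall>x\<in>H. \<phi> (g \<otimes> x \<otimes> inv g) = \<phi> x"
    and g: "g \<in> carrier G" and h: "h \<in> carrier G"
  shows "\<bar>psi G H \<phi> g - psi G H \<phi> (g \<otimes> h) + psi G H \<phi> h - cc G H \<phi> [H #> g, H #> h]\<bar> \<le> 4 * D"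
proof -
  define sA where "sA = sec (H #> g)"
  define sB where "sB = sec (H #> h)"
  have sA: "sA \<in> carrier G" unfolding sA_def using sec_props(1)[OF pi_car[OF g]] .
  have sB: "sB \<in> carrier G" unfolding sB_def using sec_props(1)[OF pi_car[OF h]] .
  define n where "n = g \<otimes> inv sA"
  define m where "m = h \<otimes> inv sB"
  have n: "n \<in> H" unfolding n_def sA_def using coset_rep[OF g] .
  have m: "m \<in> H" unfolding m_def sB_def using coset_rep[OF h] .
  define m' where "m' = sA \<otimes> m \<otimes> inv sA"
  have m': "m' \<in> H" unfolding m'_def using inv_op_closed2[OF sA m] .
  have pm': "\<phi> m' = \<phi> m" unfolding m'_def using inv sA m by blast
  have nc: "n \<in> carrier G" "m \<in> carrier G" "m' \<in> carrier G" using n m m' by auto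
  have eg: "g = n \<otimes> sA" unfolding n_def using g sA by (simp add: m_assoc)
  have eh: "h = m \<otimes> sB" unfolding m_def using h sB by (simp add: m_assoc)
  have egh: "g \<otimes> h = n \<otimes> (m' \<otimes> (sA \<otimes> sB))"
    unfolding n_def m'_def m_def using g h sA sB by (simp add: m_assoc cancel1)
  have c: "cc G H \<phi> [H #> g, H #> h] = psi G H \<phi> sA - psi G H \<phi> (sA \<otimes> sB) + psi G H \<phi> sB"
    unfolding sA_def sB_def using cc_eval pi_car g h by blast
  have e1: "\<bar>psi G H \<phi> g - \<phi> n - psi G H \<phi> sA\<bar> \<le> D" using psi_gen[OF q n sA] eg by simp
  have e2: "\<bar>psi G H \<phi> h - \<phi> m - psi G H \<phi> sB\<bar> \<le> D" using psi_gen[OF q m sB] eh by simp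
  have e3: "\<bar>psi G H \<phi> (g \<otimes> h) - \<phi> n - psi G H \<phi> (m' \<otimes> (sA \<otimes> sB))\<bar> \<le> D"
    using psi_gen[OF q n, of "m' \<otimes> (sA \<otimes> sB)"] egh nc sA sB by simp
  have e4: "\<bar>psi G H \<phi> (m' \<otimes> (sA \<otimes> sB)) - \<phi> m' - psi G H \<phi> (sA \<otimes> sB)\<bar> \<le> D"
    using psi_gen[OF q m', of "sA \<otimes> sB"] sA sB by simp
  show ?thesis unfolding c using e1 e2 e3 e4 pm' unfolding abs_le_iff by linarith
qed

lemma dpsi_zero:
  "a \<in> carrier G \<Longrightarrow> b \<in> carrier G \<Longrightarrow> c \<in> carrier G \<Longrightarrow>
   (p b - p (b \<otimes> c) + p c) - (p (a \<otimes> b) - p (a \<otimes> b \<otimes> c) + p c)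
   + (p a - p (a \<otimes> (b \<otimes> c)) + p (b \<otimes> c)) - (p a - p (a \<otimes> b) + p b) = (0::real)"
  by (simp add: m_assoc)

lemma dcc_bound:
  assumes q: "qmH \<phi> D" and inv: "\<forall>g\<in>carrier G. \<forall>x\<in>H. \<phi> (g \<otimes> x \<otimes> inv g) = \<phi> x"
  shows "\<bar>coboundary (G Mod H) 2 (cc G H \<phi>) xs\<bar> \<le> 16 * D"
proof (cases "length xs = 3 \<and> set xs \<subseteq> carrier (G Mod H)")
  case False
  have h1: "\<one> \<in> H" by (rule subgroup.one_closed[OF subgroup_axioms])
  have "\<bar>\<phi> (\<one> \<otimes> \<one>) - \<phi> \<one> - \<phi> \<one>\<bar> \<le> D" using q h1 unfolding qmH_def by blast
  then have D: "0 \<le> D" by simp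
  have F': "\<not> (length xs = Suc 2 \<and> set xs \<subseteq> carrier (G Mod H))" using False by simp
  have "coboundary (G Mod H) 2 (cc G H \<phi>) xs = 0"
    unfolding coboundary_def if_not_P[OF F'] by (rule refl)
  then show ?thesis using D by simp
next
  case True
  then have "length xs = 3" by simp
  from length3_cases[OF this] obtain A B C where xs: "xs = [A, B, C]" by blast
  have "set xs \<subseteq> carrier (G Mod H)" using True by simp
  then have ABC: "A \<in> carrier (G Mod H)" "B \<in> carrier (G Mod H)" "C \<in> carrier (G Mod H)" unfolding xs by simp_all
  define a where "a = sec A"
  define b where "b = sec B"
  define c where "c = sec C"
  have abc: "a \<in> carrier G" "b \<in> carrier G" "c \<in> carrier G"
    unfolding a_def b_def c_def using sec_props(1)[OF ABC(1)] sec_props(1)[OF ABC(2)] sec_props(1)[OF ABC(3)] by simp_all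
  have eA: "A = H #> a" and eB: "B = H #> b" and eC: "C = H #> c"
    unfolding a_def b_def c_def using sec_props(3)[OF ABC(1)] sec_props(3)[OF ABC(2)] sec_props(3)[OF ABC(3)] by simp_all
  let ?p = "psi G H \<phi>"
  have ev: "coboundary (G Mod H) 2 (cc G H \<phi>) xs =
     cc G H \<phi> [H #> b, H #> c] - cc G H \<phi> [H #> (a \<otimes> b), H #> c]
     + cc G H \<phi> [H #> a, H #> (b \<otimes> c)] - cc G H \<phi> [H #> a, H #> b]"
  proof -
    have "coboundary (G Mod H) 2 (cc G H \<phi>) xs = cc G H \<phi> [B, C] - cc G H \<phi> [A \<otimes>\<^bsub>G Mod H\<^esub> B, C]
       + cc G H \<phi> [A, B \<otimes>\<^bsub>G Mod H\<^esub> C] - cc G H \<phi> [A, B]"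
      unfolding xs by (rule coboundary_eval2[OF ABC])
    also have "A \<otimes>\<^bsub>G Mod H\<^esub> B = H #> (a \<otimes> b)" unfolding eA eB by (rule pi_mult[OF abc(1,2)])
    also have "B \<otimes>\<^bsub>G Mod H\<^esub> C = H #> (b \<otimes> c)" unfolding eB eC by (rule pi_mult[OF abc(2,3)])
    finally show ?thesis unfolding eA eB eC .
  qed
  have f1: "\<bar>?p b - ?p (b \<otimes> c) + ?p c - cc G H \<phi> [H #> b, H #> c]\<bar> \<le> 4 * D"
    using E1[OF q inv abc(2) abc(3)] .
  have f2: "\<bar>?p (a \<otimes> b) - ?p (a \<otimes> b \<otimes> c) + ?p c - cc G H \<phi> [H #> (a \<otimes> b), H #> c]\<bar> \<le> 4 * D"
    using E1[OF q inv, of "a \<otimes> b" c] abc by simp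
  have f3: "\<bar>?p a - ?p (a \<otimes> (b \<otimes> c)) + ?p (b \<otimes> c) - cc G H \<phi> [H #> a, H #> (b \<otimes> c)]\<bar> \<le> 4 * D"
    using E1[OF q inv, of a "b \<otimes> c"] abc by simp
  have f4: "\<bar>?p a - ?p (a \<otimes> b) + ?p b - cc G H \<phi> [H #> a, H #> b]\<bar> \<le> 4 * D"
    using E1[OF q inv abc(1) abc(2)] .
  have z: "(?p b - ?p (b \<otimes> c) + ?p c) - (?p (a \<otimes> b) - ?p (a \<otimes> b \<otimes> c) + ?p c)
   + (?p a - ?p (a \<otimes> (b \<otimes> c)) + ?p (b \<otimes> c)) - (?p a - ?p (a \<otimes> b) + ?p b) = 0"
    using dpsi_zero[OF abc] .
  show ?thesis unfolding ev using f1 f2 f3 f4 z unfolding abs_le_iff by linarith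
qed

end

context normal
begin

lemma hom_pow:
  assumes p: "p \<in> inv_homs G H" and x: "x \<in> H"
  shows "p (x [^] (n::nat)) = real n * p x"
proof (induction n)
  case 0
  have "p (\<one> \<otimes> \<one>) = p \<one> + p \<one>" using p subgroup.one_closed[OF subgroup_axioms] unfolding inv_homs_def by blast
  then show ?case by simp
next
  case (Suc n)
  have xn: "x [^] n \<in> H" using subgroup_int_pow_closed[OF subgroup_axioms x, of "int n"] by (simp add: int_pow_int)
  have "p (x [^] n \<otimes> x) = p (x [^] n) + p x" using p xn x unfolding inv_homs_def by blast
  then show ?case using Suc by (simp add: algebra_simps)
qed

lemma pow_in_H: "x \<in> H \<Longrightarrow> x [^] (n::nat) \<in> H"
  using subgroup_int_pow_closed[OF subgroup_axioms, of x "int n"] by (simp add: int_pow_int)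

lemma step3:
  assumes \<phi>: "\<phi> \<in> inv_hom_quasimorphisms G H"
    and K: "K \<lhd> G" "H \<subseteq> K"
    and c': "c' \<in> transgression_cocycles G H"
    and \<beta>: "\<forall>xs. \<bar>\<beta> xs\<bar> \<le> Cb"
    and eq: "\<forall>A\<in>carrier (G Mod H). \<forall>B\<in>carrier (G Mod H).
               cc G H \<phi> [A, B] = c' [A, B] + coboundary (G Mod H) 1 \<alpha> [A, B] + \<beta> [A, B]"
  shows "\<phi> \<in> {(\<lambda>x. a x + (if x \<in> H then b x else 0)) | a b. a \<in> inv_homs G H \<and> b \<in> inv_hom_quasimorphisms G K}"
proof -
  obtain D where q: "qmH \<phi> D" using \<phi> unfolding inv_hom_quasimorphisms_def qmH_def by blast
  have inv: "\<forall>g\<in>carrier G. \<forall>x\<in>H. \<phi> (g \<otimes> x \<otimes> inv g) = \<phi> x"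
    using \<phi> unfolding inv_hom_quasimorphisms_def by blast
  have \<phi>0: "\<forall>x. x \<notin> H \<longrightarrow> \<phi> x = 0" using \<phi> unfolding inv_hom_quasimorphisms_def by blast
  have \<phi>pow: "\<forall>x\<in>H. \<forall>k::int. \<phi> (x [^] k) = of_int k * \<phi> x"
    using \<phi> unfolding inv_hom_quasimorphisms_def by blast
  obtain \<phi>' \<psi>' where \<phi>': "\<phi>' \<in> inv_homs G H"
    and \<psi>': "\<forall>n\<in>H. \<forall>g\<in>carrier G. \<psi>' (n \<otimes> g) = \<phi>' n + \<psi>' g"
    and c'e: "\<forall>g\<in>carrier G. \<forall>h\<in>carrier G. c' [H #> g, H #> h] = \<psi>' h - \<psi>' (g \<otimes> h) + \<psi>' g"
    using c' unfolding transgression_cocycles_def by blast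
  define F where "F g = psi G H \<phi> g - \<psi>' g - \<alpha> [H #> g]" for g
  have Fq: "\<bar>F (x \<otimes> y) - F x - F y\<bar> \<le> 4 * D + Cb" if x: "x \<in> carrier G" and y: "y \<in> carrier G" for x y
  proof -
    have A: "H #> x \<in> carrier (G Mod H)" "H #> y \<in> carrier (G Mod H)" using pi_car x y by auto
    have da: "coboundary (G Mod H) 1 \<alpha> [H #> x, H #> y] = \<alpha> [H #> y] - \<alpha> [H #> (x \<otimes> y)] + \<alpha> [H #> x]"
      using coboundary_eval1[OF A, of \<alpha>] pi_mult[OF x y] by simp
    have e: "cc G H \<phi> [H #> x, H #> y] = c' [H #> x, H #> y] + coboundary (G Mod H) 1 \<alpha> [H #> x, H #> y] + \<beta> [H #> x, H #> y]"
      using eq A by blast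
    have c'xy: "c' [H #> x, H #> y] = \<psi>' y - \<psi>' (x \<otimes> y) + \<psi>' x" using c'e x y by blast
    have E: "\<bar>psi G H \<phi> x - psi G H \<phi> (x \<otimes> y) + psi G H \<phi> y - cc G H \<phi> [H #> x, H #> y]\<bar> \<le> 4 * D"
      using E1[OF q inv x y] .
    have b: "\<bar>\<beta> [H #> x, H #> y]\<bar> \<le> Cb" using \<beta> by blast
    show ?thesis unfolding F_def using E e da c'xy b unfolding abs_le_iff by linarith
  qed
  interpret Q: qmG G F "4 * D + Cb"
    by (unfold_locales) (rule Fq)
  define b where "b x = (if x \<in> K then Q.L x else 0)" for x
  have Ksub: "subgroup K G" using K(1) normal_imp_subgroup by blast
  have KC: "K \<subseteq> carrier G" using subgroup.subset[OF Ksub] .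
  have bK: "b \<in> inv_hom_quasimorphisms G K"
    unfolding inv_hom_quasimorphisms_def
  proof (intro CollectI conjI allI impI ballI)
    fix x assume "x \<notin> K" then show "b x = 0" by (simp add: b_def)
  next
    show "\<exists>D. \<forall>x\<in>K. \<forall>y\<in>K. \<bar>b (x \<otimes> y) - b x - b y\<bar> \<le> D"
    proof (intro exI ballI)
      fix x y assume xy: "x \<in> K" "y \<in> K"
      then have "x \<otimes> y \<in> K" using subgroup.m_closed[OF Ksub] by blast
      then show "\<bar>b (x \<otimes> y) - b x - b y\<bar> \<le> 4 * (4 * D + Cb)"
        using xy Q.L_qm[of x y] KC by (auto simp: b_def)
    qed
  next
    fix x and k :: int assume x: "x \<in> K"
    have "x [^] k \<in> K" using subgroup_int_pow_closed[OF Ksub x] .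
    then show "b (x [^] k) = of_int k * b x" using x Q.L_int_pow[of x k] KC by (auto simp: b_def)
  next
    fix g x assume g: "g \<in> carrier G" and x: "x \<in> K"
    have "g \<otimes> x \<otimes> inv g \<in> K" using normal.inv_op_closed2[OF K(1) g x] .
    then show "b (g \<otimes> x \<otimes> inv g) = b x" using x g Q.L_conj[of g x] KC by (auto simp: b_def)
  qed
  have one: "\<one> \<in> carrier G" by simp
  define C where "C = D + \<bar>psi G H \<phi> \<one>\<bar> + \<bar>\<psi>' \<one>\<bar> + \<bar>\<alpha> [H]\<bar>"
  have Fy: "\<bar>F y - (\<phi> y - \<phi>' y)\<bar> \<le> C" if y: "y \<in> H" for y
  proof -
    have yc: "y \<in> carrier G" using y by auto
    have p1: "\<bar>psi G H \<phi> y - \<phi> y - psi G H \<phi> \<one>\<bar> \<le> D" using psi_gen[OF q y one] yc by simp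
    have p2: "\<psi>' y = \<phi>' y + \<psi>' \<one>" using \<psi>' y one yc by (metis r_one)
    have p3: "H #> y = H" using coset_H[OF y] .
    show ?thesis unfolding F_def C_def p3 using p1 p2 unfolding abs_le_iff by linarith
  qed
  have LF: "Q.L x = \<phi> x - \<phi>' x" if x: "x \<in> H" for x
  proof (rule Q.L_unique)
    show "x \<in> carrier G" using x by auto
    fix n :: nat
    have xn: "x [^] n \<in> H" using pow_in_H[OF x] .
    have a: "\<phi> (x [^] n) = real n * \<phi> x" using \<phi>pow x by (metis int_pow_int of_int_of_nat_eq)
    have b: "\<phi>' (x [^] n) = real n * \<phi>' x" using hom_pow[OF \<phi>' x] .
    show "\<bar>F (x [^] n) - real n * (\<phi> x - \<phi>' x)\<bar> \<le> C"
      using Fy[OF xn] a b by (simp add: right_diff_distrib)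
  qed
  have "\<phi> = (\<lambda>x. \<phi>' x + (if x \<in> H then b x else 0))"
  proof
    fix x show "\<phi> x = \<phi>' x + (if x \<in> H then b x else 0)"
    proof (cases "x \<in> H")
      case True
      then have "x \<in> K" using K(2) by blast
      then show ?thesis using True LF by (simp add: b_def)
    next
      case False
      then show ?thesis using \<phi>0 \<phi>' unfolding inv_homs_def by simp
    qed
  qed
  then show ?thesis using \<phi>' bK by blast
qed

end

lemma subsp_inv_homs: "subsp (inv_homs G H)"
  unfolding subsp_def inv_homs_def by (auto simp: algebra_simps)

lemma subsp_transgression: "subsp (transgression_cocycles G H)"
  unfolding subsp_def
proof (intro conjI ballI allI)
  show "(\<lambda>_. 0) \<in> transgression_cocycles G H"
    unfolding transgression_cocycles_def
    using subsp_zero[OF subsp_cochains] subsp_zero[OF subsp_inv_homs]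
    by (intro CollectI conjI exI[of _ "\<lambda>_. 0"]) auto
next
  fix x y a b assume x: "x \<in> transgression_cocycles G H" and y: "y \<in> transgression_cocycles G H"
  obtain p1 q1 where 1: "x \<in> cochains (G Mod H) 2" "p1 \<in> inv_homs G H"
    "\<forall>n\<in>H. \<forall>g\<in>carrier G. q1 (n \<otimes>\<^bsub>G\<^esub> g) = p1 n + q1 g"
    "\<forall>g\<in>carrier G. \<forall>h\<in>carrier G. x [r_coset G H g, r_coset G H h] = q1 h - q1 (g \<otimes>\<^bsub>G\<^esub> h) + q1 g"
    using x unfolding transgression_cocycles_def by blast
  obtain p2 q2 where 2: "y \<in> cochains (G Mod H) 2" "p2 \<in> inv_homs G H"
    "\<forall>n\<in>H. \<forall>g\<in>carrier G. q2 (n \<otimes>\<^bsub>G\<^esub> g) = p2 n + q2 g"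
    "\<forall>g\<in>carrier G. \<forall>h\<in>carrier G. y [r_coset G H g, r_coset G H h] = q2 h - q2 (g \<otimes>\<^bsub>G\<^esub> h) + q2 g"
    using y unfolding transgression_cocycles_def by blast
  have c: "(\<lambda>t. a * x t + b * y t) \<in> cochains (G Mod H) 2" using subsp_comb[OF subsp_cochains 1(1) 2(1)] .
  have p: "(\<lambda>t. a * p1 t + b * p2 t) \<in> inv_homs G H" using subsp_comb[OF subsp_inv_homs 1(2) 2(2)] .
  have e1: "\<forall>n\<in>H. \<forall>g\<in>carrier G. a * q1 (n \<otimes>\<^bsub>G\<^esub> g) + b * q2 (n \<otimes>\<^bsub>G\<^esub> g) = (a * p1 n + b * p2 n) + (a * q1 g + b * q2 g)"
    using 1(3) 2(3) by (simp add: algebra_simps)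
  have e2: "\<forall>g\<in>carrier G. \<forall>h\<in>carrier G. a * x [r_coset G H g, r_coset G H h] + b * y [r_coset G H g, r_coset G H h] =
        (a * q1 h + b * q2 h) - (a * q1 (g \<otimes>\<^bsub>G\<^esub> h) + b * q2 (g \<otimes>\<^bsub>G\<^esub> h)) + (a * q1 g + b * q2 g)"
  proof (intro ballI)
    fix g h assume gh: "g \<in> carrier G" "h \<in> carrier G"
    have xe: "x [r_coset G H g, r_coset G H h] = q1 h - q1 (g \<otimes>\<^bsub>G\<^esub> h) + q1 g" using 1(4) gh by blast
    have ye: "y [r_coset G H g, r_coset G H h] = q2 h - q2 (g \<otimes>\<^bsub>G\<^esub> h) + q2 g" using 2(4) gh by blast
    show "a * x [r_coset G H g, r_coset G H h] + b * y [r_coset G H g, r_coset G H h] =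
        (a * q1 h + b * q2 h) - (a * q1 (g \<otimes>\<^bsub>G\<^esub> h) + b * q2 (g \<otimes>\<^bsub>G\<^esub> h)) + (a * q1 g + b * q2 g)"
      by (simp only: xe ye) (simp add: algebra_simps)
  qed
  show "(\<lambda>t. a * x t + b * y t) \<in> transgression_cocycles G H"
    unfolding transgression_cocycles_def
    apply (rule CollectI, rule conjI, rule c)
    apply (rule exI[of _ "\<lambda>t. a * p1 t + b * p2 t"], rule exI[of _ "\<lambda>t. a * q1 t + b * q2 t"])
    using p e1 e2 by simp
qed

lemma subsp_d2reps: "subsp (d2_image_reps G H)"
  unfolding d2_image_reps_def
  using subsp_sumset[OF subsp_transgression subsp_coboundaries[of "G Mod H" 1]] by (simp add: numeral_2_eq_2)

lemma subsp_QN: "subsp (inv_hom_quasimorphisms G H)"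
  unfolding subsp_def
proof (intro conjI ballI allI)
  show "(\<lambda>_. 0) \<in> inv_hom_quasimorphisms G H" unfolding inv_hom_quasimorphisms_def by auto
next
  fix x y a b assume x: "x \<in> inv_hom_quasimorphisms G H" and y: "y \<in> inv_hom_quasimorphisms G H"
  obtain D1 where D1: "\<forall>u\<in>H. \<forall>v\<in>H. \<bar>x (u \<otimes>\<^bsub>G\<^esub> v) - x u - x v\<bar> \<le> D1"
    using x unfolding inv_hom_quasimorphisms_def by blast
  obtain D2 where D2: "\<forall>u\<in>H. \<forall>v\<in>H. \<bar>y (u \<otimes>\<^bsub>G\<^esub> v) - y u - y v\<bar> \<le> D2"
    using y unfolding inv_hom_quasimorphisms_def by blast
  have q: "\<forall>u\<in>H. \<forall>v\<in>H. \<bar>(a * x (u \<otimes>\<^bsub>G\<^esub> v) + b * y (u \<otimes>\<^bsub>G\<^esub> v)) - (a * x u + b * y u) - (a * x v + b * y v)\<bar> \<le> \<bar>a\<bar> * D1 + \<bar>b\<bar> * D2"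
  proof (intro ballI)
    fix u v assume uv: "u \<in> H" "v \<in> H"
    have "\<bar>(a * x (u \<otimes>\<^bsub>G\<^esub> v) + b * y (u \<otimes>\<^bsub>G\<^esub> v)) - (a * x u + b * y u) - (a * x v + b * y v)\<bar>
        = \<bar>a * (x (u \<otimes>\<^bsub>G\<^esub> v) - x u - x v) + b * (y (u \<otimes>\<^bsub>G\<^esub> v) - y u - y v)\<bar>"
      by (simp add: algebra_simps)
    also have "\<dots> \<le> \<bar>a\<bar> * \<bar>x (u \<otimes>\<^bsub>G\<^esub> v) - x u - x v\<bar> + \<bar>b\<bar> * \<bar>y (u \<otimes>\<^bsub>G\<^esub> v) - y u - y v\<bar>"
      using abs_triangle_ineq[of "a * (x (u \<otimes>\<^bsub>G\<^esub> v) - x u - x v)" "b * (y (u \<otimes>\<^bsub>G\<^esub> v) - y u - y v)"]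
      by (simp add: abs_mult)
    also have "\<dots> \<le> \<bar>a\<bar> * D1 + \<bar>b\<bar> * D2"
      using D1 D2 uv by (intro add_mono mult_left_mono) auto
    finally show "\<bar>(a * x (u \<otimes>\<^bsub>G\<^esub> v) + b * y (u \<otimes>\<^bsub>G\<^esub> v)) - (a * x u + b * y u) - (a * x v + b * y v)\<bar> \<le> \<bar>a\<bar> * D1 + \<bar>b\<bar> * D2" .
  qed
  have z: "\<forall>u. u \<notin> H \<longrightarrow> a * x u + b * y u = 0" using x y unfolding inv_hom_quasimorphisms_def by simp
  have h: "\<forall>u\<in>H. \<forall>k::int. a * x (u [^]\<^bsub>G\<^esub> k) + b * y (u [^]\<^bsub>G\<^esub> k) = of_int k * (a * x u + b * y u)"
    using x y unfolding inv_hom_quasimorphisms_def by (simp add: algebra_simps)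
  have c: "\<forall>g\<in>carrier G. \<forall>u\<in>H. a * x (g \<otimes>\<^bsub>G\<^esub> u \<otimes>\<^bsub>G\<^esub> inv\<^bsub>G\<^esub> g) + b * y (g \<otimes>\<^bsub>G\<^esub> u \<otimes>\<^bsub>G\<^esub> inv\<^bsub>G\<^esub> g) = a * x u + b * y u"
    using x y unfolding inv_hom_quasimorphisms_def by simp
  show "(\<lambda>t. a * x t + b * y t) \<in> inv_hom_quasimorphisms G H"
    unfolding inv_hom_quasimorphisms_def using z q h c by blast
qed

lemma mem_bcoc: "f \<in> cochains \<Gamma> n \<Longrightarrow> \<forall>xs. \<bar>f xs\<bar> \<le> C \<Longrightarrow> coboundary \<Gamma> n f = (\<lambda>_. 0) \<Longrightarrow> f \<in> bounded_cocycles \<Gamma> n"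
  unfolding bounded_cocycles_def bounded_cochains_def by blast

lemma Hb_to_ker: "fin_dim_Hb \<Gamma> 3 \<Longrightarrow> fin_dim_ker_comparison \<Gamma> 3"
proof -
  assume h: "fin_dim_Hb \<Gamma> 3"
  have e: "(3::nat) = Suc 2" by simp
  define S where "S = bounded_cocycles \<Gamma> 3 \<inter> coboundaries \<Gamma> 3"
  have V: "subsp S"
    unfolding S_def e by (rule subsp_Int[OF subsp_bounded_cocycles subsp_coboundaries])
  have B: "subsp (bounded_coboundaries \<Gamma> 3)" unfolding e by (rule subsp_bounded_coboundaries)
  obtain F0 where F0: "finite F0" "\<forall>z\<in>bounded_cocycles \<Gamma> 3. rep (bounded_coboundaries \<Gamma> 3) F0 z"
    using h unfolding fin_dim_Hb_def fin_dim_quot_def rep_def lc_def by blast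
  have "\<forall>s\<in>S. rep (bounded_coboundaries \<Gamma> 3) F0 s" using F0(2) unfolding S_def by blast
  from span_reduce[OF F0(1) B V this] obtain F where F: "finite F" "F \<subseteq> S" "\<forall>s\<in>S. rep (bounded_coboundaries \<Gamma> 3) F s"
    by blast
  show ?thesis unfolding fin_dim_ker_comparison_def fin_dim_quot_def
    using F unfolding S_def[symmetric] rep_def lc_def by blast
qed

lemma H2_to_d2: "fin_dim_H (G Mod H) 2 \<Longrightarrow> fin_dim_H2_mod_d2 G H"
proof -
  assume h: "fin_dim_H (G Mod H) 2"
  have "coboundaries (G Mod H) 2 \<subseteq> d2_image_reps G H"
  proof
    fix b assume b: "b \<in> coboundaries (G Mod H) 2"
    have z: "(\<lambda>_. 0) \<in> transgression_cocycles G H" by (rule subsp_zero[OF subsp_transgression])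
    show "b \<in> d2_image_reps G H" unfolding d2_image_reps_def mem_Collect_eq
      by (rule exI[of _ "\<lambda>_. 0"], rule exI[of _ b]) (use z b in simp)
  qed
  then show ?thesis using fin_dim_quot_mono[OF h[unfolded fin_dim_H_def]] unfolding fin_dim_H2_mod_d2_def by blast
qed

context normal
begin

lemma main_part1:
  assumes hk: "fin_dim_ker_comparison (G Mod H) 3" and h2: "fin_dim_H2_mod_d2 G H"
    and K: "K \<lhd> G" "H \<subseteq> K"
  shows "fin_dim_W G K H"
proof -
  interpret Gm: group "G Mod H" by (rule factorgroup_is_group)
  define QN where "QN = inv_hom_quasimorphisms G H"
  have sQN: "subsp QN" unfolding QN_def by (rule subsp_QN)
  define T1 where "T1 \<phi> = coboundary (G Mod H) 2 (cc G H \<phi>)" for \<phi>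
  have T1lin: "T1 (\<lambda>t. a * \<phi> t + b * \<psi> t) = (\<lambda>t. a * T1 \<phi> t + b * T1 \<psi> t)" for a b \<phi> \<psi>
    unfolding T1_def cc_lin coboundary_lin ..
  have e3: "(3::nat) = Suc 2" by simp
  have e2: "(2::nat) = Suc 1" by simp
  have cob3: "coboundaries (G Mod H) 3 = coboundary (G Mod H) 2 ` cochains (G Mod H) 2"
    unfolding e3 by (rule coboundaries_Suc)
  have bcob3: "bounded_coboundaries (G Mod H) 3 = coboundary (G Mod H) 2 ` bounded_cochains (G Mod H) 2"
    unfolding e3 by (rule bounded_coboundaries_Suc)
  have cob2: "coboundaries (G Mod H) 2 = coboundary (G Mod H) 1 ` cochains (G Mod H) 1"
    unfolding e2 by (rule coboundaries_Suc)
  have T1Z: "\<forall>\<phi>\<in>QN. T1 \<phi> \<in> bounded_cocycles (G Mod H) 3 \<inter> coboundaries (G Mod H) 3"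
  proof
    fix \<phi> assume \<phi>: "\<phi> \<in> QN"
    obtain D where q: "qmH \<phi> D" using \<phi> unfolding QN_def inv_hom_quasimorphisms_def qmH_def by blast
    have inv: "\<forall>g\<in>carrier G. \<forall>x\<in>H. \<phi> (g \<otimes> x \<otimes> inv g) = \<phi> x"
      using \<phi> unfolding QN_def inv_hom_quasimorphisms_def by blast
    have bd: "\<forall>xs. \<bar>T1 \<phi> xs\<bar> \<le> 16 * D" using dcc_bound[OF q inv] unfolding T1_def by blast
    have ch: "T1 \<phi> \<in> cochains (G Mod H) 3" unfolding T1_def e3 by (rule coboundary_cochains)
    have cz: "coboundary (G Mod H) 3 (T1 \<phi>) = (\<lambda>_. 0)" unfolding T1_def by (rule Gm.dd_zero)
    have "T1 \<phi> \<in> coboundaries (G Mod H) 3" unfolding cob3 T1_def using cc_cochains by blast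
    then show "T1 \<phi> \<in> bounded_cocycles (G Mod H) 3 \<inter> coboundaries (G Mod H) 3"
      using mem_bcoc[OF ch bd cz] by blast
  qed
  have B3: "subsp (bounded_coboundaries (G Mod H) 3)" unfolding e3 by (rule subsp_bounded_coboundaries)
  have Z3fd: "fin_dim_quot (bounded_cocycles (G Mod H) 3 \<inter> coboundaries (G Mod H) 3) (bounded_coboundaries (G Mod H) 3)"
    using hk unfolding fin_dim_ker_comparison_def .
  have lin1: "\<forall>v\<in>QN. \<forall>w\<in>QN. \<forall>a b. (\<lambda>t. T1 (\<lambda>u. a * v u + b * w u) t - a * T1 v t - b * T1 w t) \<in> bounded_coboundaries (G Mod H) 3"
    using subsp_zero[OF B3] by (simp add: T1lin)
  from pullback[OF sQN B3 T1Z Z3fd lin1] obtain F1 where F1: "finite F1" "F1 \<subseteq> QN"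
    "\<forall>v\<in>QN. \<exists>c. (\<lambda>t. v t - lc F1 c t) \<in> QN \<and> T1 (\<lambda>t. v t - lc F1 c t) \<in> bounded_coboundaries (G Mod H) 3"
    by blast
  define K1 where "K1 = {v\<in>QN. T1 v \<in> bounded_coboundaries (G Mod H) 3}"
  have sK1: "subsp K1" unfolding K1_def by (rule subsp_preimage[OF sQN B3]) (simp add: T1lin)
  have ex\<beta>: "\<exists>\<beta>. \<beta> \<in> bounded_cochains (G Mod H) 2 \<and> T1 v = coboundary (G Mod H) 2 \<beta>" if "v \<in> K1" for v
    using that unfolding K1_def bcob3 by blast
  define bet where "bet v = (SOME \<beta>. \<beta> \<in> bounded_cochains (G Mod H) 2 \<and> T1 v = coboundary (G Mod H) 2 \<beta>)" for v
  have bet: "bet v \<in> bounded_cochains (G Mod H) 2 \<and> T1 v = coboundary (G Mod H) 2 (bet v)" if "v \<in> K1" for v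
    using someI_ex[OF ex\<beta>[OF that]] unfolding bet_def .
  define T2 where "T2 v = (\<lambda>xs. cc G H v xs - bet v xs)" for v
  define B2 where "B2 = {(\<lambda>x. d x + w x) | d w. d \<in> d2_image_reps G H \<and> w \<in> bounded_cocycles (G Mod H) 2}"
  have sB2: "subsp B2" unfolding B2_def by (rule subsp_sumset[OF subsp_d2reps subsp_bounded_cocycles])
  have zd2: "(\<lambda>_. 0) \<in> d2_image_reps G H" by (rule subsp_zero[OF subsp_d2reps])
  have d2B2: "d2_image_reps G H \<subseteq> B2"
  proof
    fix d assume d: "d \<in> d2_image_reps G H"
    have z: "(\<lambda>_. 0) \<in> bounded_cocycles (G Mod H) 2" by (rule subsp_zero[OF subsp_bounded_cocycles])
    show "d \<in> B2" unfolding B2_def mem_Collect_eq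
      by (rule exI[of _ d], rule exI[of _ "\<lambda>_. 0"]) (use z d in simp)
  qed
  have Z2fd: "fin_dim_quot (cocycles (G Mod H) 2) B2"
    using fin_dim_quot_mono[OF h2[unfolded fin_dim_H2_mod_d2_def] d2B2] .
  have T2Z: "\<forall>v\<in>K1. T2 v \<in> cocycles (G Mod H) 2"
  proof
    fix v assume v: "v \<in> K1"
    have bv: "bet v \<in> cochains (G Mod H) 2" using bet[OF v] unfolding bounded_cochains_def by blast
    have e: "T2 v = (\<lambda>xs. 1 * cc G H v xs + (-1) * bet v xs)" by (simp add: T2_def)
    have "coboundary (G Mod H) 2 (T2 v) = (\<lambda>xs. 1 * T1 v xs + (-1) * coboundary (G Mod H) 2 (bet v) xs)"
      unfolding e coboundary_lin T1_def ..
    then have "coboundary (G Mod H) 2 (T2 v) = (\<lambda>_. 0)" using bet[OF v] by simp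
    moreover have "T2 v \<in> cochains (G Mod H) 2"
      unfolding e by (rule subsp_comb[OF subsp_cochains cc_cochains bv])
    ultimately show "T2 v \<in> cocycles (G Mod H) 2" unfolding cocycles_def by blast
  qed
  have lin2: "\<forall>v\<in>K1. \<forall>w\<in>K1. \<forall>a b. (\<lambda>t. T2 (\<lambda>u. a * v u + b * w u) t - a * T2 v t - b * T2 w t) \<in> B2"
  proof (intro ballI allI)
    fix v w a b assume v: "v \<in> K1" and w: "w \<in> K1"
    define u where "u = (\<lambda>t. a * v t + b * w t)"
    have u: "u \<in> K1" unfolding u_def using subsp_comb[OF sK1 v w] .
    define om' where "om' = (\<lambda>t. a * bet v t + b * bet w t)"
    define om where "om = (\<lambda>t. (-1) * bet u t + 1 * om' t)"
    have om'b: "om' \<in> bounded_cochains (G Mod H) 2"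
      unfolding om'_def using subsp_comb[OF subsp_bounded_cochains conjunct1[OF bet[OF v]] conjunct1[OF bet[OF w]]] .
    have omb: "om \<in> bounded_cochains (G Mod H) 2"
      unfolding om_def using subsp_comb[OF subsp_bounded_cochains conjunct1[OF bet[OF u]] om'b] .
    have c1: "coboundary (G Mod H) 2 om' = (\<lambda>t. a * T1 v t + b * T1 w t)"
      unfolding om'_def coboundary_lin using bet[OF v] bet[OF w] by simp
    have c2: "coboundary (G Mod H) 2 om = (\<lambda>t. (-1) * T1 u t + 1 * coboundary (G Mod H) 2 om' t)"
      unfolding om_def coboundary_lin using bet[OF u] by simp
    have "T1 u = (\<lambda>t. a * T1 v t + b * T1 w t)" unfolding u_def by (rule T1lin)
    then have "coboundary (G Mod H) 2 om = (\<lambda>_. 0)" unfolding c2 c1 by simp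
    then have omc: "om \<in> bounded_cocycles (G Mod H) 2" using omb unfolding bounded_cocycles_def by blast
    have equ: "(\<lambda>t. T2 u t - a * T2 v t - b * T2 w t) = (\<lambda>x. (\<lambda>_. 0) x + om x)"
    proof
      fix t
      have "cc G H u t = a * cc G H v t + b * cc G H w t" unfolding u_def cc_lin by simp
      then show "T2 u t - a * T2 v t - b * T2 w t = (\<lambda>_. 0) t + om t"
        unfolding T2_def om_def om'_def by (simp add: algebra_simps)
    qed
    have "(\<lambda>t. T2 u t - a * T2 v t - b * T2 w t) \<in> B2" unfolding B2_def mem_Collect_eq equ
      by (rule exI[of _ "\<lambda>_. 0"], rule exI[of _ om]) (use zd2 omc in simp)
    then show "(\<lambda>t. T2 (\<lambda>u. a * v u + b * w u) t - a * T2 v t - b * T2 w t) \<in> B2"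
      unfolding u_def .
  qed
  from pullback[OF sK1 sB2 T2Z Z2fd lin2] obtain F2 where F2: "finite F2" "F2 \<subseteq> K1"
    "\<forall>v\<in>K1. \<exists>c. (\<lambda>t. v t - lc F2 c t) \<in> K1 \<and> T2 (\<lambda>t. v t - lc F2 c t) \<in> B2"
    by blast
  define W where "W = {(\<lambda>x. a x + (if x \<in> H then b x else 0)) | a b. a \<in> inv_homs G H \<and> b \<in> inv_hom_quasimorphisms G K}"
  have toW: "v \<in> W" if v: "v \<in> K1" and t: "T2 v \<in> B2" for v
  proof -
    obtain d om where d: "d \<in> d2_image_reps G H" and om: "om \<in> bounded_cocycles (G Mod H) 2" and e: "T2 v = (\<lambda>x. d x + om x)"
      using t unfolding B2_def by blast
    obtain c' bb where c': "c' \<in> transgression_cocycles G H" and bb: "bb \<in> coboundaries (G Mod H) 2"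
      and de: "d = (\<lambda>xs. c' xs + bb xs)"
      using d unfolding d2_image_reps_def by blast
    obtain \<alpha> where bbe: "bb = coboundary (G Mod H) 1 \<alpha>" using bb unfolding cob2 by blast
    obtain C1 where C1: "\<forall>xs. \<bar>bet v xs\<bar> \<le> C1" using bet[OF v] unfolding bounded_cochains_def by blast
    obtain C2 where C2: "\<forall>xs. \<bar>om xs\<bar> \<le> C2" using om unfolding bounded_cocycles_def bounded_cochains_def by blast
    have \<beta>: "\<forall>xs. \<bar>bet v xs + om xs\<bar> \<le> C1 + C2"
    proof
      fix xs show "\<bar>bet v xs + om xs\<bar> \<le> C1 + C2"
        using C1 C2 abs_triangle_ineq[of "bet v xs" "om xs"] by (meson add_mono order_trans)
    qed
    have eq: "\<forall>A\<in>carrier (G Mod H). \<forall>B\<in>carrier (G Mod H).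
        cc G H v [A, B] = c' [A, B] + coboundary (G Mod H) 1 \<alpha> [A, B] + (bet v [A, B] + om [A, B])"
    proof (intro ballI)
      fix A B
      have "T2 v [A, B] = d [A, B] + om [A, B]" using e by simp
      then show "cc G H v [A, B] = c' [A, B] + coboundary (G Mod H) 1 \<alpha> [A, B] + (bet v [A, B] + om [A, B])"
        unfolding T2_def de bbe by simp
    qed
    have vQ: "v \<in> inv_hom_quasimorphisms G H" using v unfolding K1_def QN_def by simp
    show ?thesis unfolding W_def using step3[OF vQ K(1) K(2) c' \<beta> eq] .
  qed
  have "\<forall>v\<in>QN. \<exists>w\<in>W. \<exists>c. v = (\<lambda>x. w x + (\<Sum>f\<in>F1 \<union> F2. c f * f x))"
  proof
    fix v assume v: "v \<in> QN"
    obtain c1 where c1: "(\<lambda>t. v t - lc F1 c1 t) \<in> QN" "T1 (\<lambda>t. v t - lc F1 c1 t) \<in> bounded_coboundaries (G Mod H) 3"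
      using F1(3) v by blast
    define v1 where "v1 = (\<lambda>t. v t - lc F1 c1 t)"
    have v1: "v1 \<in> K1" unfolding K1_def v1_def using c1 by simp
    obtain c2 where c2: "(\<lambda>t. v1 t - lc F2 c2 t) \<in> K1" "T2 (\<lambda>t. v1 t - lc F2 c2 t) \<in> B2"
      using F2(3) v1 by blast
    define v2 where "v2 = (\<lambda>t. v1 t - lc F2 c2 t)"
    have v2W: "v2 \<in> W" using toW c2 unfolding v2_def by blast
    obtain c where c: "(\<lambda>t. lc F1 c1 t + lc F2 c2 t) = lc (F1 \<union> F2) c" using lc_union F1(1) F2(1) by blast
    have "v = (\<lambda>x. v2 x + (\<Sum>f\<in>F1 \<union> F2. c f * f x))"
    proof
      fix x
      have "lc F1 c1 x + lc F2 c2 x = (\<Sum>f\<in>F1 \<union> F2. c f * f x)" using fun_cong[OF c, of x] by (simp add: lc_def)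
      then show "v x = v2 x + (\<Sum>f\<in>F1 \<union> F2. c f * f x)" unfolding v2_def v1_def by simp
    qed
    then show "\<exists>w\<in>W. \<exists>c. v = (\<lambda>x. w x + (\<Sum>f\<in>F1 \<union> F2. c f * f x))" using v2W by blast
  qed
  moreover have "finite (F1 \<union> F2)" using F1(1) F2(1) by simp
  moreover have "F1 \<union> F2 \<subseteq> QN" using F1(2) F2(2) unfolding K1_def by auto
  ultimately have "fin_dim_quot QN W" unfolding fin_dim_quot_def by blast
  then show ?thesis unfolding fin_dim_W_def W_def QN_def .
qed

end

theorem proposition5p6:
  fixes G :: "('g, 'b) monoid_scheme" and N :: "'g set"
  assumes "group G" and "N \<lhd> G"
  shows "(fin_dim_ker_comparison (G Mod N) 3 \<and> fin_dim_H2_mod_d2 G N \<longrightarrow>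
            (\<forall>L. L \<lhd> G \<and> N \<subseteq> L \<longrightarrow> fin_dim_W G L N))
       \<and> (fin_dim_Hb (G Mod N) 3 \<and> fin_dim_H (G Mod N) 2 \<longrightarrow>
            (\<forall>L. L \<lhd> G \<and> N \<subseteq> L \<longrightarrow> fin_dim_W G L N))"
proof -
  interpret normal N G using assms(2) .
  have A: "fin_dim_ker_comparison (G Mod N) 3 \<and> fin_dim_H2_mod_d2 G N \<longrightarrow>
            (\<forall>L. L \<lhd> G \<and> N \<subseteq> L \<longrightarrow> fin_dim_W G L N)"
    using main_part1 by blast
  show ?thesis using A Hb_to_ker H2_to_d2 by blast
qed

end
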